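(* For $n\ge1$, $$\sum_{\sigma\in\mathcal D^S_n}(-1)^{\mathrm{inv}(\sigma)}q^{\mathrm{maj}(\sigma)}=[n]_q!\sum_{k=0}^n\frac{(-1)^k q^{\binom k2}}{[k]_q!}\left(\frac{1-q}{1+q}\right)^{\lfloor (n-k)/2\rfloor}.$$
   Context: $\mathcal D^S_n$ is the set of derangements in the symmetric group $S_n$ (permutations $\sigma=\sigma_1\cdots\sigma_n$ of $[n]$ with $\sigma_i\ne i$ for all $i$). $\mathrm{inv}(\sigma)=\#\{(i,j):i<j,\sigma_i>\sigma_j\}$ (the Coxeter length), $\mathrm{maj}(\sigma)=\sum_{i:\sigma_i>\sigma_{i+1}} i$. For an indeterminate $x$ and $m\ge1$, $[m]_x=1+x+\dots+x^{m-1}$, $[0]_x=1$, $[m]_q!=[1]_q\cdots[m]_q$, $[0]_q!=1$. *)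

theory Defs
  imports Complex_Main "HOL-Combinatorics.Permutations"
begin

text \<open>q-integer [m]_x = 1 + x + ... + x^(m-1) for m >= 1, and [0]_x = 1 (paper's convention).\<close>
definition qint :: "'a::comm_ring_1 \<Rightarrow> nat \<Rightarrow> 'a" where
  "qint x m = (if m = 0 then 1 else (\<Sum>i<m. x ^ i))"

definition qfact :: "'a::comm_ring_1 \<Rightarrow> nat \<Rightarrow> 'a" where
  "qfact x m = (\<Prod>i=1..m. qint x i)"

definition derangements :: "nat \<Rightarrow> (nat \<Rightarrow> nat) set" where
  "derangements n = {\<sigma>. \<sigma> permutes {1..n} \<and> (\<forall>i\<in>{1..n}. \<sigma> i \<noteq> i)}"

definition inv_num :: "nat \<Rightarrow> (nat \<Rightarrow> nat) \<Rightarrow> nat" where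
  "inv_num n \<sigma> = card {(i, j). i \<in> {1..n} \<and> j \<in> {1..n} \<and> i < j \<and> \<sigma> i > \<sigma> j}"

definition maj :: "nat \<Rightarrow> (nat \<Rightarrow> nat) \<Rightarrow> nat" where
  "maj n \<sigma> = (\<Sum>i \<in> {i. 1 \<le> i \<and> i < n \<and> \<sigma> i > \<sigma> (Suc i)}. i)"

end

theory Submission
  imports Defs "HOL-Computational_Algebra.Formal_Power_Series"
begin


definition sh :: "nat \<Rightarrow> nat \<Rightarrow> nat" where "sh j x = (if j \<le> x then Suc x else x)"

fun desL :: "nat list \<Rightarrow> nat" where
  "desL (x#y#zs) = (if y < x then 1 else 0) + desL (y#zs)"
| "desL _ = 0"

fun majL :: "nat list \<Rightarrow> nat" where
  "majL (x#y#zs) = (if y < x then 1 else 0) + desL (y#zs) + majL (y#zs)"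
| "majL _ = 0"

fun invL :: "nat list \<Rightarrow> nat" where
  "invL [] = 0"
| "invL (x#xs) = length (filter (\<lambda>y. y < x) xs) + invL xs"

fun crs :: "nat list \<Rightarrow> nat list \<Rightarrow> nat" where
  "crs [] Y = 0"
| "crs (x#X) Y = length (filter (\<lambda>y. y < x) Y) + crs X Y"

fun fixo :: "nat \<Rightarrow> nat list \<Rightarrow> nat" where
  "fixo k [] = 0"
| "fixo k (x#xs) = (if x = Suc k then 1 else 0) + fixo (Suc k) xs"

lemma desL_Cons: "desL (x#ys) = (if ys \<noteq> [] \<and> hd ys < x then 1 else 0) + desL ys"
  by (cases ys) auto

lemma majL_Cons: "majL (x#ys) = (if ys \<noteq> [] \<and> hd ys < x then 1 else 0) + desL ys + majL ys"
  by (cases ys) auto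

declare desL.simps(1)[simp del] majL.simps(1)[simp del]

lemma desL_append: "desL (X@Y) = desL X + desL Y + (if X \<noteq> [] \<and> Y \<noteq> [] \<and> hd Y < last X then 1 else 0)"
  by (induction X) (auto simp: desL_Cons)

lemma majL_append: "majL (X@Y) = majL X + majL Y + length X * desL Y
   + (if X \<noteq> [] \<and> Y \<noteq> [] \<and> hd Y < last X then length X else 0)"
  by (induction X) (auto simp: majL_Cons desL_append desL_Cons)

lemma invL_append: "invL (X@Y) = invL X + invL Y + crs X Y"
  by (induction X) auto

lemma desL_map: "(\<And>x y. (f y < f x) = (y < x)) \<Longrightarrow> desL (map f xs) = desL xs"
  by (induction xs) (auto simp: desL_Cons hd_map)

lemma majL_map: "(\<And>x y. (f y < f x) = (y < x)) \<Longrightarrow> majL (map f xs) = majL xs"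
  by (induction xs) (auto simp: majL_Cons hd_map desL_map)

lemma invL_map: "(\<And>x y. (f y < f x) = (y < x)) \<Longrightarrow> invL (map f xs) = invL xs"
  by (induction xs) (auto simp: filter_map o_def)

lemma crs_map: "(\<And>x y. (f y < f x) = (y < x)) \<Longrightarrow> crs (map f X) (map f Y) = crs X Y"
  by (induction X) (auto simp: filter_map o_def)

lemma sh_less: "(sh j y < sh j x) = (y < x)"
  by (auto simp: sh_def)


definition ins :: "nat \<Rightarrow> nat list \<Rightarrow> nat list" where
  "ins p xs = map (sh (Suc p)) (take p xs) @ Suc p # map (sh (Suc p)) (drop p xs)"

definition qi :: "real \<Rightarrow> nat \<Rightarrow> real" where "qi q m = (\<Sum>i<m. q ^ i)"

lemma qi_add: "qi q (a + b) = qi q a + q ^ a * qi q b"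
  unfolding qi_def by (induction b) (auto simp: algebra_simps power_add)

lemma qi_Suc: "qi q (Suc a) = qi q a + q ^ a"
  unfolding qi_def by simp

lemma qi_Suc_shift: "qi q (Suc a) = 1 + q * qi q a"
  unfolding qi_def by (simp add: sum.lessThan_Suc_shift sum_distrib_left del: sum.lessThan_Suc)

lemma majL_ins_mid:
  assumes "0 < p" "p < length xs"
  shows "majL (ins p xs) + (if xs!p < xs!(p-1) then p else 0)
       = majL xs + desL (drop p xs) + (if xs!p \<le> p then Suc p else 0)
         + (if Suc p \<le> xs!(p-1) then p else 0)"
proof -
  define A where "A = take p xs"
  define B where "B = drop p xs"
  have xs: "xs = A @ B" by (simp add: A_def B_def)
  have lA: "length A = p" using assms by (simp add: A_def)
  have An: "A \<noteq> []" "B \<noteq> []" using assms by (auto simp: A_def B_def)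
  have lastA: "last A = xs!(p-1)"
  proof -
    obtain i where i: "p = Suc i" using assms by (cases p) auto
    show ?thesis using assms unfolding A_def i by (simp add: take_Suc_conv_app_nth)
  qed
  have hdB: "hd B = xs!p" using assms by (simp add: B_def hd_drop_conv_nth)
  have m1: "majL xs = majL A + majL B + p * desL B + (if hd B < last A then p else 0)"
    using An lA by (simp add: xs majL_append)
  have shm: "\<And>x y. (sh (Suc p) y < sh (Suc p) x) = (y < x)" by (rule sh_less)
  have e1: "majL (ins p xs) = majL (map (sh (Suc p)) A) + majL (Suc p # map (sh (Suc p)) B)
     + p * desL (Suc p # map (sh (Suc p)) B) + (if Suc p < last (map (sh (Suc p)) A) then p else 0)"
    using An lA by (simp add: ins_def A_def[symmetric] B_def[symmetric] majL_append)
  have h2: "hd (map (sh (Suc p)) B) = sh (Suc p) (hd B)" using An by (simp add: hd_map)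
  have l2: "last (map (sh (Suc p)) A) = sh (Suc p) (last A)" using An by (simp add: last_map)
  have "majL (ins p xs) + (if xs!p < xs!(p-1) then p else 0)
       = majL xs + desL B + (if xs!p \<le> p then Suc p else 0)
         + (if Suc p \<le> xs!(p-1) then p else 0)"
    using e1 m1 h2 l2 An
    by (auto simp: majL_Cons desL_Cons majL_map[OF shm] desL_map[OF shm] lastA hdB sh_def)
  then show ?thesis by (simp add: B_def)
qed


definition Cc :: "nat list \<Rightarrow> nat \<Rightarrow> nat" where
  "Cc xs p = desL (drop p xs) + fixo p (drop p xs)"
definition GG :: "nat list \<Rightarrow> nat \<Rightarrow> nat" where
  "GG xs p = Cc xs p + (if xs!p \<le> p then 1 else 0)"
definition EE :: "nat list \<Rightarrow> nat \<Rightarrow> nat" where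
  "EE xs p = majL (ins p xs) + fixo p (drop p xs)"

lemma Cc_pred:
  assumes "0 < p" "p < length xs"
  shows "Cc xs (p-1) = Cc xs p + (if xs!p < xs!(p-1) then 1 else 0) + (if xs!(p-1) = p then 1 else 0)"
proof -
  have d: "drop (p-1) xs = xs!(p-1) # drop p xs"
    using assms by (metis Cons_nth_drop_Suc Suc_pred' less_imp_diff_less)
  have h: "hd (drop p xs) = xs!p" "drop p xs \<noteq> []" using assms by (auto simp: hd_drop_conv_nth)
  show ?thesis unfolding Cc_def d using assms h by (simp add: desL_Cons)
qed

lemma EE_step:
  assumes "0 < p" "p < length xs"
  shows "(EE xs p = majL xs + GG xs p \<and> GG xs (p-1) = Suc (GG xs p))
       \<or> (EE xs p = majL xs + GG xs p + p \<and> GG xs (p-1) = GG xs p)"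
proof -
  have m: "majL (ins p xs) + (if xs!p < xs!(p-1) then p else 0)
       = majL xs + desL (drop p xs) + (if xs!p \<le> p then Suc p else 0)
         + (if Suc p \<le> xs!(p-1) then p else 0)" by (rule majL_ins_mid[OF assms])
  have c: "Cc xs (p-1) = Cc xs p + (if xs!p < xs!(p-1) then 1 else 0) + (if xs!(p-1) = p then 1 else 0)"
    by (rule Cc_pred[OF assms])
  show ?thesis using m c assms unfolding EE_def GG_def Cc_def
    by (cases "xs!p < xs!(p-1)"; cases "xs!p \<le> p"; cases "Suc p \<le> xs!(p-1)"; cases "xs!(p-1) = p") auto
qed


lemma EE_last:
  assumes "\<forall>x\<in>set xs. x \<le> length xs"
  shows "EE xs (length xs) = majL xs"
proof -
  have "map (sh (Suc (length xs))) xs = xs"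
    using assms by (auto simp: sh_def intro!: map_idI)
  moreover have "xs \<noteq> [] \<Longrightarrow> \<not> Suc (length xs) < last xs"
    using assms last_in_set[of xs] by fastforce
  ultimately show ?thesis unfolding EE_def ins_def
    by (auto simp: majL_append)
qed

lemma GG_last:
  assumes "\<forall>x\<in>set xs. x \<le> length xs" "xs \<noteq> []"
  shows "GG xs (length xs - 1) = 1"
proof -
  obtain m where m: "length xs = Suc m" using assms by (cases xs) auto
  have d: "drop m xs = [xs!m]"
    using m by (metis Cons_nth_drop_Suc drop_all le_refl lessI)
  have "xs!m \<le> Suc m" using assms m by (metis lessI nth_mem)
  moreover have "length xs - 1 = m" using m by simp
  ultimately show ?thesis unfolding GG_def Cc_def d by (auto simp: d)
qed

lemma EE_first:
  assumes "0 \<notin> set xs"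
  shows "EE xs 0 = majL xs + Cc xs 0" 
proof -
  have "\<forall>x\<in>set xs. 1 \<le> x" using assms by (metis less_one not_le)
  then have sh1: "map (sh (Suc 0)) xs = map Suc xs" by (auto simp: sh_def)
  have "xs \<noteq> [] \<Longrightarrow> hd xs \<noteq> 0" using assms by (cases xs) auto
  moreover have "xs \<noteq> [] \<Longrightarrow> hd (map Suc xs) \<noteq> 0" by (cases xs) auto
  ultimately show "EE xs 0 = majL xs + Cc xs 0" unfolding EE_def ins_def Cc_def
    by (auto simp: majL_Cons hd_map majL_map desL_map sh1) (cases xs; simp)
qed

lemma GG_first: "0 \<notin> set xs \<Longrightarrow> xs \<noteq> [] \<Longrightarrow> GG xs 0 = Cc xs 0"
  unfolding GG_def by (cases xs) auto

lemma EE_partial: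
  assumes "\<forall>x\<in>set xs. 1 \<le> x \<and> x \<le> length xs" "n = length xs"
  shows "p + d = n \<Longrightarrow> 1 \<le> p \<Longrightarrow> GG xs (p-1) \<le> n+1-p \<and>
     (\<Sum>i=p..n. q ^ EE xs i) = q ^ majL xs * (qi q (GG xs (p-1)) + q ^ (p + GG xs (p-1)) * qi q (n+1-p - GG xs (p-1)))"
proof (induction d arbitrary: p)
  case 0
  then have p: "p = n" by simp
  have ne: "xs \<noteq> []" using 0 assms by auto
  have "GG xs (p-1) = 1" using GG_last[of xs] assms ne p by auto
  moreover have "EE xs n = majL xs" using EE_last[of xs] assms by auto
  ultimately show ?case using p by (simp add: qi_def)
next
  case (Suc d)
  define g where "g = GG xs p"
  have pn: "0 < p" "p < length xs" using Suc.prems assms by auto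
  have IH: "GG xs p \<le> n - p \<and> (\<Sum>i=Suc p..n. q ^ EE xs i) = q ^ majL xs * (qi q g + q ^ (Suc p + g) * qi q (n - p - g))"
    using Suc.IH[of "Suc p"] Suc.prems by (simp add: g_def)
  have split: "(\<Sum>i=p..n. q ^ EE xs i) = q ^ EE xs p + (\<Sum>i=Suc p..n. q ^ EE xs i)"
    using pn assms by (simp add: sum.atLeast_Suc_atMost)
  from EE_step[OF pn] show ?case
  proof
    assume a: "EE xs p = majL xs + GG xs p \<and> GG xs (p-1) = Suc (GG xs p)"
    have "(\<Sum>i=p..n. q ^ EE xs i) = q ^ majL xs * (q ^ g + qi q g + q ^ (Suc p + g) * qi q (n - p - g))"
      using split IH a by (simp add: g_def power_add algebra_simps)
    also have "\<dots> = q ^ majL xs * (qi q (Suc g) + q ^ (p + Suc g) * qi q (n + 1 - p - Suc g))"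
      by (simp add: qi_Suc)
    moreover have "g \<le> n - p" using IH g_def by simp
    ultimately show ?thesis using a pn assms by (simp add: g_def)
  next
    assume a: "EE xs p = majL xs + GG xs p + p \<and> GG xs (p-1) = GG xs p"
    have le: "g \<le> n - p" using IH g_def by simp
    have e: "n + 1 - p - g = Suc (n - p - g)" using le pn assms by simp
    have "(\<Sum>i=p..n. q ^ EE xs i) = q ^ majL xs * (q ^ (p + g) + qi q g + q ^ (Suc p + g) * qi q (n - p - g))"
      using split IH a by (simp add: g_def power_add algebra_simps)
    also have "\<dots> = q ^ majL xs * (qi q g + q ^ (p + g) * qi q (n + 1 - p - g))"
      unfolding e qi_Suc_shift by (simp add: algebra_simps power_add)
    finally show ?thesis using a le pn assms by (simp add: g_def)
  qed
qed

lemma EE_total: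
  assumes "\<forall>x\<in>set xs. 1 \<le> x \<and> x \<le> length xs" "n = length xs"
  shows "(\<Sum>i=0..n. q ^ EE xs i) = qi q (Suc n) * q ^ majL xs"
proof (cases "n = 0")
  case True
  then have "xs = []" using assms by simp
  then show ?thesis using True by (simp add: EE_def ins_def qi_def)
next
  case False
  have z: "0 \<notin> set xs" using assms by auto
  have P: "GG xs 0 \<le> n \<and> (\<Sum>i=1..n. q ^ EE xs i) = q ^ majL xs * (qi q (GG xs 0) + q ^ (1 + GG xs 0) * qi q (n - GG xs 0))"
    using EE_partial[OF assms, of 1 "n-1" q] False by simp
  have "(\<Sum>i=0..n. q ^ EE xs i) = q ^ EE xs 0 + (\<Sum>i=Suc 0..n. q ^ EE xs i)"
    by (simp add: sum.atLeast_Suc_atMost)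
  also have "\<dots> = q ^ majL xs * (q ^ GG xs 0 + qi q (GG xs 0) + q ^ (1 + GG xs 0) * qi q (n - GG xs 0))"
    using P EE_first[OF z] GG_first[OF z] False assms by (simp add: power_add algebra_simps)
  also have "\<dots> = q ^ majL xs * qi q (Suc (GG xs 0) + (n - GG xs 0))"
    using qi_add[of q "Suc (GG xs 0)" "n - GG xs 0"] qi_Suc[of q "GG xs 0"] by (simp add: algebra_simps)
  also have "Suc (GG xs 0) + (n - GG xs 0) = Suc n" using P by simp
  finally show ?thesis by simp
qed



definition LL :: "nat \<Rightarrow> nat list set" where
  "LL n = {xs. distinct xs \<and> set xs = {1..n}}"

lemma LL_length: "xs \<in> LL n \<Longrightarrow> length xs = n"
  unfolding LL_def using distinct_card[of xs] by auto

lemma finite_LL: "finite (LL n)"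
proof (rule finite_subset)
  show "LL n \<subseteq> {xs. set xs \<subseteq> {1..n} \<and> length xs = n}" using LL_length by (auto simp: LL_def)
  show "finite {xs. set xs \<subseteq> {1..n} \<and> length xs = n}" by (rule finite_lists_length_eq) simp
qed

lemma crs_Cons2: "crs X (y # Y) = length (filter (\<lambda>x. y < x) X) + crs X Y"
  by (induction X) auto

lemma len_filter_less_LL:
  assumes "xs \<in> LL n" "p \<le> n"
  shows "length (filter (\<lambda>y. y < Suc p) xs) = p"
proof -
  have "set (filter (\<lambda>y. y < Suc p) xs) = {1..p}" using assms by (auto simp: LL_def)
  moreover have "distinct (filter (\<lambda>y. y < Suc p) xs)" using assms by (auto simp: LL_def)
  ultimately show ?thesis using distinct_card[of "filter (\<lambda>y. y < Suc p) xs"] by simp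
qed

lemma invL_ins:
  assumes "xs \<in> LL n" "p \<le> n"
  shows "invL (ins p xs) = invL xs + 2 * length (filter (\<lambda>y. y < Suc p) (drop p xs))"
proof -
  define A where "A = take p xs"
  define B where "B = drop p xs"
  have xs: "xs = A @ B" by (simp add: A_def B_def)
  have lA: "length A = p" using assms LL_length[OF assms(1)] by (simp add: A_def)
  have shm: "\<And>x y. (sh (Suc p) y < sh (Suc p) x) = (y < x)" by (rule sh_less)
  have i1: "invL (ins p xs) = invL A + invL B + crs A B + length (filter (\<lambda>y. y < Suc p) B)
     + length (filter (\<lambda>x. Suc p \<le> x) A)"
  proof -
    have a: "filter (\<lambda>y. y < Suc p) (map (sh (Suc p)) B) = map (sh (Suc p)) (filter (\<lambda>y. y < Suc p) B)"
      by (induction B) (auto simp: sh_def)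
    have b: "length (filter (\<lambda>x. Suc p < x) (map (sh (Suc p)) A)) = length (filter (\<lambda>x. Suc p \<le> x) A)"
      by (induction A) (auto simp: sh_def)
    show ?thesis
      unfolding ins_def A_def[symmetric] B_def[symmetric] invL_append crs_Cons2 invL.simps
        invL_map[OF shm] crs_map[OF shm] a b by simp
  qed
  have f1: "length (filter (\<lambda>y. y < Suc p) A) + length (filter (\<lambda>y. y < Suc p) B) = p"
    using len_filter_less_LL[OF assms] unfolding xs by simp
  have f2: "length (filter (\<lambda>y. y < Suc p) A) + length (filter (\<lambda>y. \<not> y < Suc p) A) = p"
    using sum_length_filter_compl[of "\<lambda>y. y < Suc p" A] lA by simp
  have f3: "filter (\<lambda>y. \<not> y < Suc p) A = filter (\<lambda>x. Suc p \<le> x) A"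
    by (rule filter_cong) auto
  have ix: "invL xs = invL A + invL B + crs A B" unfolding xs by (rule invL_append)
  have "invL (ins p xs) = invL xs + 2 * length (filter (\<lambda>y. y < Suc p) B)"
    using i1 f1 f2[unfolded f3] ix by linarith
  then show ?thesis by (simp only: B_def)
qed


definition Fs :: "nat list \<Rightarrow> nat set" where
  "Fs ys = {i. i < length ys \<and> ys!i = Suc i}"

definition fixL :: "nat list \<Rightarrow> nat" where "fixL ys = card (Fs ys)"

lemma finite_Fs: "finite (Fs ys)" unfolding Fs_def by simp

lemma fixo_drop: "fixo k (drop k ys) = card {i \<in> Fs ys. k \<le> i}"
proof (induction "length ys - k" arbitrary: k)
  case 0
  then have e: "{i \<in> Fs ys. k \<le> i} = {}" by (auto simp: Fs_def)
  show ?case unfolding e using 0 by simp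
next
  case (Suc d)
  then have k: "k < length ys" by simp
  have d: "drop k ys = ys!k # drop (Suc k) ys" using k by (simp add: Cons_nth_drop_Suc)
  have IH: "fixo (Suc k) (drop (Suc k) ys) = card {i \<in> Fs ys. Suc k \<le> i}"
    using Suc by simp
  have s: "{i \<in> Fs ys. k \<le> i} = (if ys!k = Suc k then {k} else {}) \<union> {i \<in> Fs ys. Suc k \<le> i}"
    using k by (auto simp: Fs_def) (metis Suc_leI le_neq_implies_less)
  have fin: "finite {i \<in> Fs ys. Suc k \<le> i}" using finite_Fs by simp
  show ?case unfolding d s using IH fin by (auto simp: card_insert_if)
qed

lemma sum_Fs_qi:
  fixes F :: "nat set"
  assumes "finite F"
  shows "(\<Sum>j\<in>F. q ^ card {i \<in> F. j < i}) = qi q (card F)"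
  using assms
proof (induction F rule: finite_linorder_max_induct)
  case empty
  then show ?case by (simp add: qi_def)
next
  case (insert b A)
  have bA: "b \<notin> A" using insert by auto
  have e0: "{i \<in> insert b A. b < i} = {}" using insert by auto
  have e1: "card {i \<in> insert b A. b < i} = 0" unfolding e0 by simp
  have e2: "\<And>j. j \<in> A \<Longrightarrow> {i \<in> insert b A. j < i} = insert b {i \<in> A. j < i}" using insert by auto
  have e3: "\<And>j. j \<in> A \<Longrightarrow> card {i \<in> insert b A. j < i} = Suc (card {i \<in> A. j < i})"
    using e2 insert bA by (simp add: card_insert_if)
  have "(\<Sum>j\<in>insert b A. q ^ card {i \<in> insert b A. j < i})
      = 1 + (\<Sum>j\<in>A. q ^ card {i \<in> insert b A. j < i})"
    unfolding sum.insert[OF \<open>finite A\<close> bA] e1 by simp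
  also have "\<dots> = 1 + q * (\<Sum>j\<in>A. q ^ card {i \<in> A. j < i})"
    using e3 by (simp add: sum_distrib_left)
  also have "\<dots> = qi q (card (insert b A))" using insert bA by (simp add: qi_Suc_shift)
  finally show ?case .
qed

definition unsh :: "nat \<Rightarrow> nat \<Rightarrow> nat" where "unsh j x = (if j < x then x - 1 else x)"

definition rem :: "nat \<Rightarrow> nat list \<Rightarrow> nat list" where
  "rem p ys = map (unsh (Suc p)) (take p ys @ drop (Suc p) ys)"

lemma length_ins: "length (ins p xs) = Suc (length xs)"
  by (simp add: ins_def)

lemma nth_ins:
  assumes "p \<le> length xs" "i < Suc (length xs)"
  shows "ins p xs ! i = (if i < p then sh (Suc p) (xs!i) else if i = p then Suc p else sh (Suc p) (xs!(i-1)))"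
  using assms by (auto simp: ins_def nth_append min_def nth_Cons')

lemma Fs_ins:
  assumes "p \<le> length xs"
  shows "Fs (ins p xs) = {i \<in> Fs xs. i < p} \<union> {p} \<union> Suc ` {i \<in> Fs xs. p \<le> i}"
proof -
  have "i \<in> Fs (ins p xs) \<longleftrightarrow> i \<in> {i \<in> Fs xs. i < p} \<union> {p} \<union> Suc ` {i \<in> Fs xs. p \<le> i}" for i
  proof (cases "i < p")
    case True
    then show ?thesis using assms by (auto simp: Fs_def length_ins nth_ins sh_def)
  next
    case False
    show ?thesis
    proof (cases "i = p")
      case True
      then show ?thesis using assms by (auto simp: Fs_def length_ins nth_ins)
    next
      case False
      then obtain k where k: "i = Suc k" "p \<le> k" using \<open>\<not> i < p\<close> by (cases i) auto
      show ?thesis using assms k by (auto simp: Fs_def length_ins nth_ins sh_def image_iff split: if_splits)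
    qed
  qed
  then show ?thesis by blast
qed

lemma fixL_ins:
  assumes "p \<le> length xs"
  shows "fixL (ins p xs) = Suc (fixL xs)"
    and "card {i \<in> Fs (ins p xs). p < i} = card {i \<in> Fs xs. p \<le> i}"
proof -
  have fin: "finite (Fs xs)" by (rule finite_Fs)
  have sp: "Fs xs = {i \<in> Fs xs. i < p} \<union> {i \<in> Fs xs. p \<le> i}" by auto
  have "card (Fs xs) = card {i \<in> Fs xs. i < p} + card {i \<in> Fs xs. p \<le> i}"
    using fin by (subst sp, subst card_Un_disjoint) auto
  moreover have "card (Fs (ins p xs)) = card {i \<in> Fs xs. i < p} + Suc (card {i \<in> Fs xs. p \<le> i})"
    unfolding Fs_ins[OF assms] using fin
    by (subst card_Un_disjoint; auto simp: card_image card_insert_if)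
  ultimately show "fixL (ins p xs) = Suc (fixL xs)" by (simp add: fixL_def)
  have "{i \<in> Fs (ins p xs). p < i} = Suc ` {i \<in> Fs xs. p \<le> i}"
    unfolding Fs_ins[OF assms] by auto
  then show "card {i \<in> Fs (ins p xs). p < i} = card {i \<in> Fs xs. p \<le> i}"
    by (simp add: card_image)
qed


lemma inj_sh: "inj (sh j)"
  by (auto simp: inj_def sh_def split: if_splits)

lemma sh_neq: "sh (Suc p) x \<noteq> Suc p"
  by (auto simp: sh_def)

lemma unsh_sh: "unsh j (sh j x) = x"
  by (auto simp: sh_def unsh_def)

lemma sh_unsh: "x \<noteq> j \<Longrightarrow> sh j (unsh j x) = x"
  by (auto simp: sh_def unsh_def)

lemma inj_unsh: "inj_on (unsh j) {x. x \<noteq> j}"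
  by (auto simp: inj_on_def unsh_def split: if_splits)

lemma ins_LL:
  assumes "xs \<in> LL n" "p \<le> n"
  shows "ins p xs \<in> LL (Suc n)"
proof -
  have dx: "distinct (take p xs @ drop p xs)" using assms by (simp add: LL_def)
  have dm: "distinct (map (sh (Suc p)) (take p xs) @ map (sh (Suc p)) (drop p xs))"
    using dx inj_sh[of "Suc p"] unfolding map_append[symmetric]
    by (simp add: distinct_map inj_on_def inj_def)
  have nm: "Suc p \<notin> set (map (sh (Suc p)) (take p xs) @ map (sh (Suc p)) (drop p xs))"
    by (auto simp: sh_def)
  have gen: "\<And>X Y (y::nat). distinct (X @ Y) \<Longrightarrow> y \<notin> set (X @ Y) \<Longrightarrow> distinct (X @ y # Y)"
    by auto
  have d: "distinct (ins p xs)"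
    unfolding ins_def by (rule gen[OF dm nm])
  have s1: "set (ins p xs) = insert (Suc p) (sh (Suc p) ` set xs)"
    unfolding ins_def by (metis append_take_drop_id image_Un list.simps(15) set_append set_map Un_insert_right)
  have s2: "insert (Suc p) (sh (Suc p) ` {1..n}) = {1..Suc n}"
  proof
    show "insert (Suc p) (sh (Suc p) ` {1..n}) \<subseteq> {1..Suc n}" using assms by (auto simp: sh_def)
    show "{1..Suc n} \<subseteq> insert (Suc p) (sh (Suc p) ` {1..n})"
    proof
      fix y assume y: "y \<in> {1..Suc n}"
      show "y \<in> insert (Suc p) (sh (Suc p) ` {1..n})"
      proof (cases "y \<le> p")
        case True
        then have "y = sh (Suc p) y" "y \<in> {1..n}" using y assms by (auto simp: sh_def)
        then show ?thesis by blast
      next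
        case False
        show ?thesis
        proof (cases "y = Suc p")
          case False
          then have "y = sh (Suc p) (y - 1)" "y - 1 \<in> {1..n}" using y \<open>\<not> y \<le> p\<close> by (auto simp: sh_def)
          then show ?thesis by blast
        qed simp
      qed
    qed
  qed
  show ?thesis using d s1 s2 assms by (simp add: LL_def)
qed

lemma rem_ins:
  assumes "p \<le> length xs"
  shows "rem p (ins p xs) = xs"
proof -
  have t: "take p (ins p xs) = map (sh (Suc p)) (take p xs)"
    using assms by (simp add: ins_def)
  have dr: "drop (Suc p) (ins p xs) = map (sh (Suc p)) (drop p xs)"
    using assms by (simp add: ins_def)
  show ?thesis unfolding rem_def t dr
    by (simp add: unsh_sh map_idI o_def flip: map_append)
qed

lemma rem_facts:
  assumes "ys \<in> LL (Suc n)" "p \<le> n" "ys!p = Suc p"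
  shows "ins p (rem p ys) = ys" "rem p ys \<in> LL n"
proof -
  have ly: "length ys = Suc n" using assms LL_length by blast
  define T where "T = take p ys"
  define D where "D = drop (Suc p) ys"
  have ys: "ys = T @ Suc p # D"
    using assms ly unfolding T_def D_def by (metis id_take_nth_drop le_imp_less_Suc)
  have lT: "length T = p" using ly assms by (simp add: T_def)
  have dys: "distinct (T @ Suc p # D)" using assms(1) ys by (simp add: LL_def)
  have nT: "Suc p \<notin> set T" and nD: "Suc p \<notin> set D" using dys by auto
  have r: "rem p ys = map (unsh (Suc p)) (T @ D)"
    unfolding rem_def T_def D_def by simp
  show "ins p (rem p ys) = ys"
    unfolding r ins_def using lT nT nD
    by (simp add: ys o_def) (auto intro!: map_idI sh_unsh)
  have inj: "inj_on (unsh (Suc p)) (set (T @ D))"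
    using nT nD by (auto intro: inj_on_subset[OF inj_unsh])
  have dTD: "distinct (T @ D)" using dys by auto
  have dr: "distinct (rem p ys)" unfolding r using distinct_map[of "unsh (Suc p)" "T @ D"] dTD inj by blast
  have sy: "set (T @ D) = {1..Suc n} - {Suc p}" using assms(1) dys unfolding ys by (auto simp: LL_def)
  have su: "unsh (Suc p) ` ({1..Suc n} - {Suc p}) = {1..n}"
  proof
    show "unsh (Suc p) ` ({1..Suc n} - {Suc p}) \<subseteq> {1..n}" using assms by (auto simp: unsh_def)
    show "{1..n} \<subseteq> unsh (Suc p) ` ({1..Suc n} - {Suc p})"
    proof
      fix y assume y: "y \<in> {1..n}"
      show "y \<in> unsh (Suc p) ` ({1..Suc n} - {Suc p})"
      proof (cases "y \<le> p")
        case True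
        then have "y = unsh (Suc p) y" "y \<in> {1..Suc n} - {Suc p}" using y by (auto simp: unsh_def)
        then show ?thesis by blast
      next
        case False
        then have "y = unsh (Suc p) (Suc y)" "Suc y \<in> {1..Suc n} - {Suc p}" using y by (auto simp: unsh_def)
        then show ?thesis by blast
      qed
    qed
  qed
  have "set (rem p ys) = {1..n}" unfolding r set_map sy su by (rule refl)
  then show "rem p ys \<in> LL n" using dr unfolding LL_def by simp
qed


definition wt :: "real \<Rightarrow> nat list \<Rightarrow> real" where
  "wt q ys = (-1) ^ invL ys * q ^ majL ys"

lemma LL_vals: "xs \<in> LL n \<Longrightarrow> \<forall>x\<in>set xs. 1 \<le> x \<and> x \<le> length xs"
  using LL_length[of xs n] by (auto simp: LL_def)

lemma fix_rec:
  "qi q (Suc m) * (\<Sum>ys\<in>{ys\<in>LL (Suc n). fixL ys = Suc m}. wt q ys)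
   = qi q (Suc n) * (\<Sum>xs\<in>{xs\<in>LL n. fixL xs = m}. wt q xs)"
proof -
  define S0 where "S0 = {xs\<in>LL n. fixL xs = m}"
  define S1 where "S1 = {ys\<in>LL (Suc n). fixL ys = Suc m}"
  define h where "h = (\<lambda>(ys, p). (-1::real) ^ invL ys * q ^ (majL ys + card {i \<in> Fs ys. p < i}))"
  have fin0: "finite S0" using finite_LL by (simp add: S0_def)
  have fin1: "finite S1" using finite_LL by (simp add: S1_def)
  have one: "qi q (Suc n) * wt q xs = (\<Sum>p\<in>{0..n}. h (ins p xs, p))" if xs: "xs \<in> LL n" for xs
  proof -
    have ln: "length xs = n" using LL_length xs by blast
    have "qi q (Suc n) * wt q xs = (-1) ^ invL xs * (\<Sum>p=0..n. q ^ EE xs p)"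
      using EE_total[OF LL_vals[OF xs] ln[symmetric], of q] by (simp add: wt_def)
    also have "\<dots> = (\<Sum>p\<in>{0..n}. h (ins p xs, p))"
      unfolding sum_distrib_left
    proof (rule sum.cong[OF refl])
      fix p assume p: "p \<in> {0..n}"
      have "invL (ins p xs) = invL xs + 2 * length (filter (\<lambda>y. y < Suc p) (drop p xs))"
        using invL_ins[OF xs] p by simp
      then have s: "(-1::real) ^ invL (ins p xs) = (-1) ^ invL xs"
        by (simp add: power_add power_mult)
      have e: "EE xs p = majL (ins p xs) + card {i \<in> Fs (ins p xs). p < i}"
        unfolding EE_def fixo_drop using fixL_ins(2)[of p xs] p ln by simp
      show "(-1) ^ invL xs * q ^ EE xs p = h (ins p xs, p)"
        unfolding h_def e using s by simp
    qed
    finally show ?thesis .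
  qed
  have "qi q (Suc n) * (\<Sum>xs\<in>S0. wt q xs) = (\<Sum>xs\<in>S0. \<Sum>p\<in>{0..n}. h (ins p xs, p))"
    unfolding sum_distrib_left using one by (simp add: S0_def)
  also have "\<dots> = (\<Sum>(xs,p)\<in>S0 \<times> {0..n}. h (ins p xs, p))"
    by (rule sum.cartesian_product)
  also have "\<dots> = (\<Sum>(ys,p)\<in>Sigma S1 Fs. h (ys, p))"
  proof -
    have A1: "rem p (ins p xs) = xs" "ins p xs \<in> S1" "p \<in> Fs (ins p xs)" if a0: "xs \<in> S0" "p \<le> n" for xs p
    proof -
      have a: "(xs, p) \<in> S0 \<times> {0..n}" using a0 by simp
      have xs: "xs \<in> LL n" "fixL xs = m" "p \<le> n" using a by (auto simp: S0_def)
      have ln: "length xs = n" using LL_length xs by blast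
      have "p \<in> Fs (ins p xs)" using Fs_ins[of p xs] xs ln by simp
      then show "rem p (ins p xs) = xs" "ins p xs \<in> S1" "p \<in> Fs (ins p xs)"
        using rem_ins[of p xs] ins_LL[OF xs(1) xs(3)] fixL_ins(1)[of p xs] xs ln by (simp_all add: S1_def)
    qed
    have B1: "ins p (rem p ys) = ys" "rem p ys \<in> S0" "p \<le> n" if b0: "ys \<in> S1" "p \<in> Fs ys" for ys p
    proof -
      have b: "(ys, p) \<in> Sigma S1 Fs" using b0 by simp
      have ys: "ys \<in> LL (Suc n)" "fixL ys = Suc m" "p \<in> Fs ys" using b by (auto simp: S1_def)
      have ly: "length ys = Suc n" using LL_length ys by blast
      have pn: "p \<le> n" "ys!p = Suc p" using ys(3) ly by (auto simp: Fs_def)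
      note rf = rem_facts[OF ys(1) pn]
      have lr: "length (rem p ys) = n" using LL_length rf(2) by blast
      have "fixL ys = Suc (fixL (rem p ys))" using fixL_ins(1)[of p "rem p ys"] rf(1) lr pn by simp
      then show "ins p (rem p ys) = ys" "rem p ys \<in> S0" "p \<le> n" using rf ys pn by (simp_all add: S0_def)
    qed
    show ?thesis
      by (rule sum.reindex_bij_witness[where i = "\<lambda>(ys,p). (rem p ys, p)" and j = "\<lambda>(xs,p). (ins p xs, p)"])
        (auto simp: A1 B1)
  qed
  also have "\<dots> = (\<Sum>ys\<in>S1. \<Sum>p\<in>Fs ys. h (ys, p))"
    by (rule sum.Sigma[symmetric]) (auto simp: fin1 finite_Fs)
  also have "\<dots> = (\<Sum>ys\<in>S1. wt q ys * qi q (Suc m))"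
  proof (rule sum.cong[OF refl])
    fix ys assume ys: "ys \<in> S1"
    have "(\<Sum>p\<in>Fs ys. h (ys, p)) = wt q ys * (\<Sum>p\<in>Fs ys. q ^ card {i \<in> Fs ys. p < i})"
      unfolding h_def wt_def sum_distrib_left by (simp add: power_add mult.assoc)
    also have "\<dots> = wt q ys * qi q (Suc m)"
      using sum_Fs_qi[OF finite_Fs[of ys], of q] ys by (simp add: S1_def fixL_def)
    finally show "(\<Sum>p\<in>Fs ys. h (ys, p)) = wt q ys * qi q (Suc m)" .
  qed
  finally have X: "qi q (Suc n) * (\<Sum>xs\<in>S0. wt q xs) = (\<Sum>ys\<in>S1. wt q ys * qi q (Suc m))" .
  have Y: "(\<Sum>ys\<in>S1. wt q ys * qi q (Suc m)) = qi q (Suc m) * (\<Sum>ys\<in>S1. wt q ys)"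
    by (subst sum_distrib_right[symmetric]) (rule mult.commute)
  show ?thesis using X Y unfolding S0_def S1_def by simp
qed


definition sv :: "nat \<Rightarrow> nat \<Rightarrow> nat" where
  "sv a x = (if x = a then Suc a else if x = Suc a then a else x)"

fun adjp :: "nat \<Rightarrow> nat list \<Rightarrow> bool" where
  "adjp a (x#y#zs) = ((x = a \<and> y = Suc a) \<or> (x = Suc a \<and> y = a) \<or> adjp a (y#zs))"
| "adjp a _ = False"

lemma sv_sv: "sv a (sv a x) = x" by (auto simp: sv_def)

lemma sv_less: "\<not> (x = a \<and> y = Suc a) \<Longrightarrow> \<not> (x = Suc a \<and> y = a) \<Longrightarrow> (sv a y < sv a x) = (y < x)"
  by (auto simp: sv_def)

lemma adjp_Cons: "adjp a (x#ys) = ((ys \<noteq> [] \<and> ((x = a \<and> hd ys = Suc a) \<or> (x = Suc a \<and> hd ys = a))) \<or> adjp a ys)"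
  by (cases ys) auto

lemma desL_majL_sv: "\<not> adjp a ys \<Longrightarrow> desL (map (sv a) ys) = desL ys \<and> majL (map (sv a) ys) = majL ys"
proof (induction ys)
  case Nil
  then show ?case by simp
next
  case (Cons x ys)
  then have IH: "desL (map (sv a) ys) = desL ys \<and> majL (map (sv a) ys) = majL ys"
    by (simp add: adjp_Cons)
  show ?case
  proof (cases ys)
    case Nil
    then show ?thesis by simp
  next
    case (Cons y zs)
    then have "(sv a y < sv a x) = (y < x)" using \<open>\<not> adjp a (x # ys)\<close> by (intro sv_less) auto
    then show ?thesis using IH Cons by (simp add: desL_Cons majL_Cons)
  qed
qed

lemma adjp_sv: "adjp a (map (sv a) ys) = adjp a ys"
  by (induction ys rule: adjp.induct) (auto simp: sv_def)

lemma cntL2: "distinct ys \<Longrightarrow> \<not> b < a \<Longrightarrow>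
  length (filter (\<lambda>y. y < a \<or> y = b) ys) = length (filter (\<lambda>y. y < a) ys) + (if b \<in> set ys then 1 else 0)"
  by (induction ys) auto

lemma cnt1: "a \<notin> set ys \<Longrightarrow> distinct ys \<Longrightarrow>
  length (filter (\<lambda>y. sv a y < Suc a) ys) = length (filter (\<lambda>y. y < a) ys) + (if Suc a \<in> set ys then 1 else 0)"
proof -
  assume a: "a \<notin> set ys" "distinct ys"
  have "filter (\<lambda>y. sv a y < Suc a) ys = filter (\<lambda>y. y < a \<or> y = Suc a) ys"
    using a by (intro filter_cong) (auto simp: sv_def)
  then show ?thesis using cntL2[OF a(2), of "Suc a" a] by simp
qed

lemma cnt2: "Suc a \<notin> set ys \<Longrightarrow> distinct ys \<Longrightarrow>
  length (filter (\<lambda>y. y < Suc a) ys) = length (filter (\<lambda>y. sv a y < a) ys) + (if a \<in> set ys then 1 else 0)"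
proof -
  assume a: "Suc a \<notin> set ys" "distinct ys"
  have "filter (\<lambda>y. y < Suc a) ys = filter (\<lambda>y. y < a \<or> y = a) ys"
    by (intro filter_cong) auto
  moreover have "filter (\<lambda>y. sv a y < a) ys = filter (\<lambda>y. y < a) ys"
    using a by (intro filter_cong) (auto simp: sv_def)
  ultimately show ?thesis using cntL2[OF a(2), of a a] by simp
qed

lemma cnt3: "x \<noteq> a \<Longrightarrow> x \<noteq> Suc a \<Longrightarrow>
  length (filter (\<lambda>y. sv a y < x) ys) = length (filter (\<lambda>y. y < x) ys)"
  by (induction ys) (auto simp: sv_def)

lemma invL_sv:
  assumes "distinct ys"
  shows "(-1::real) ^ invL (map (sv a) ys) = (if a \<in> set ys \<and> Suc a \<in> set ys then -1 else 1) * (-1) ^ invL ys"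
  using assms
proof (induction ys)
  case Nil
  then show ?case by simp
next
  case (Cons x ys)
  have d: "distinct ys" "x \<notin> set ys" using Cons.prems by auto
  note IH = Cons.IH[OF d(1)]
  have fm: "length (filter (\<lambda>y. y < sv a x) (map (sv a) ys)) = length (filter (\<lambda>y. sv a y < sv a x) ys)"
    by (simp add: filter_map o_def)
  show ?case
  proof (cases "x = a")
    case True
    have c: "length (filter (\<lambda>y. y < sv a x) (map (sv a) ys)) = length (filter (\<lambda>y. y < x) ys) + (if Suc a \<in> set ys then 1 else 0)"
      unfolding fm using cnt1[of a ys] d True by (simp add: sv_def)
    show ?thesis using IH c d True by (auto simp: power_add)
  next
    case False
    show ?thesis
    proof (cases "x = Suc a")
      case True
      have c: "length (filter (\<lambda>y. y < x) ys) = length (filter (\<lambda>y. y < sv a x) (map (sv a) ys)) + (if a \<in> set ys then 1 else 0)"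
        unfolding fm using cnt2[of a ys] d True by (simp add: sv_def)
      show ?thesis using IH c d True by (auto simp: power_add)
    next
      case False
      have c: "length (filter (\<lambda>y. y < sv a x) (map (sv a) ys)) = length (filter (\<lambda>y. y < x) ys)"
        unfolding fm using cnt3[of x a ys] False \<open>x \<noteq> a\<close> by (simp add: sv_def)
      show ?thesis using IH c d False \<open>x \<noteq> a\<close> by (auto simp: power_add)
    qed
  qed
qed


lemma map_sv_LL:
  assumes "ys \<in> LL n" "Suc a \<le> n" "1 \<le> a"
  shows "map (sv a) ys \<in> LL n"
proof -
  have inj: "inj (sv a)" by (metis injI sv_sv)
  have "sv a ` {1..n} = {1..n}"
  proof
    show "sv a ` {1..n} \<subseteq> {1..n}" using assms by (auto simp: sv_def)
    show "{1..n} \<subseteq> sv a ` {1..n}"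
    proof
      fix y assume "y \<in> {1..n}"
      then have "sv a y \<in> {1..n}" "y = sv a (sv a y)" using assms by (auto simp: sv_def)
      then show "y \<in> sv a ` {1..n}" by blast
    qed
  qed
  then show ?thesis using assms inj by (auto simp: LL_def distinct_map inj_on_def inj_def)
qed

lemma nonadj_zero:
  "(\<Sum>ys\<in>{ys\<in>LL (Suc (Suc m)). \<not> adjp (Suc m) ys}. wt q ys) = 0"
proof -
  define N where "N = {ys\<in>LL (Suc (Suc m)). \<not> adjp (Suc m) ys}"
  have mem: "map (sv (Suc m)) ys \<in> N" if "ys \<in> N" for ys
    using that map_sv_LL[of ys "Suc (Suc m)" "Suc m"] adjp_sv by (auto simp: N_def)
  have neg: "wt q (map (sv (Suc m)) ys) = - wt q ys" if "ys \<in> N" for ys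
  proof -
    have ys: "distinct ys" "set ys = {1..Suc (Suc m)}" "\<not> adjp (Suc m) ys" using that by (auto simp: N_def LL_def)
    show ?thesis using invL_sv[OF ys(1), of "Suc m"] desL_majL_sv[OF ys(3)] ys(2) by (simp add: wt_def)
  qed
  have "(\<Sum>ys\<in>N. wt q ys) = (\<Sum>ys\<in>N. wt q (map (sv (Suc m)) ys))"
    by (rule sum.reindex_bij_witness[where i = "map (sv (Suc m))" and j = "map (sv (Suc m))"])
       (auto simp: mem sv_sv o_def)
  also have "\<dots> = - (\<Sum>ys\<in>N. wt q ys)" using neg by (simp add: sum_negf)
  finally show ?thesis unfolding N_def[symmetric] by simp
qed


definition blk :: "nat \<Rightarrow> bool \<Rightarrow> nat \<Rightarrow> nat list \<Rightarrow> nat list" where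
  "blk m b g xs = take g xs @ (if b then [Suc m, Suc (Suc m)] else [Suc (Suc m), Suc m]) @ drop g xs"

lemma adjp_decomp: "adjp a ys \<Longrightarrow> \<exists>T D. ys = T @ [a, Suc a] @ D \<or> ys = T @ [Suc a, a] @ D"
proof (induction a ys rule: adjp.induct)
  case (1 a x y zs)
  show ?case
  proof (cases "(x = a \<and> y = Suc a) \<or> (x = Suc a \<and> y = a)")
    case True
    then show ?thesis by (metis append_Nil append_Cons)
  next
    case False
    then have "adjp a (y#zs)" using "1.prems" by auto
    then obtain T D where "y#zs = T @ [a, Suc a] @ D \<or> y#zs = T @ [Suc a, a] @ D" using 1 False by blast
    then show ?thesis by (metis append_Cons)
  qed
qed auto

lemma LL_le: "xs \<in> LL m \<Longrightarrow> x \<in> set xs \<Longrightarrow> x \<le> m"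
  by (auto simp: LL_def)

lemma blk_props:
  assumes "xs \<in> LL m" "g \<le> m"
  shows "blk m b g xs \<in> LL (Suc (Suc m))" "adjp (Suc m) (blk m b g xs)"
    "filter (\<lambda>x. x \<le> m) (blk m b g xs) = xs"
    "length (takeWhile (\<lambda>x. x \<le> m) (blk m b g xs)) = g"
    "(blk m b g xs ! g = Suc m) = b"
proof -
  have lx: "length xs = m" using LL_length assms by blast
  have le: "\<forall>x\<in>set xs. x \<le> m" using assms LL_le by blast
  have leT: "\<forall>x\<in>set (take g xs). x \<le> m" "\<forall>x\<in>set (drop g xs). x \<le> m"
    using le by (auto dest: in_set_takeD in_set_dropD)
  have lt: "length (take g xs) = g" using lx assms by simp
  have dx: "distinct (take g xs @ drop g xs)" using assms by (simp add: LL_def)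
  have sx0: "set xs = {1..m}" using assms by (simp add: LL_def)
  have sx: "set (take g xs) \<union> set (drop g xs) = {1..m}"
    unfolding set_append[symmetric] append_take_drop_id by (rule sx0)
  have dp: "distinct (take g xs)" "distinct (drop g xs)" "set (take g xs) \<inter> set (drop g xs) = {}"
    using dx by (simp_all only: distinct_append)
  show "blk m b g xs \<in> LL (Suc (Suc m))"
    unfolding LL_def blk_def using dp leT sx
    by (auto simp del: distinct_take distinct_drop)
  show "adjp (Suc m) (blk m b g xs)"
  proof -
    have "\<And>T D c1 c2. (c1 = Suc m \<and> c2 = Suc (Suc m)) \<or> (c1 = Suc (Suc m) \<and> c2 = Suc m) \<Longrightarrow> adjp (Suc m) (T @ c1 # c2 # D)"
    proof -
      fix T D c1 c2
      assume c: "(c1 = Suc m \<and> c2 = Suc (Suc m)) \<or> (c1 = Suc (Suc m) \<and> c2 = Suc m)"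
      show "adjp (Suc m) (T @ c1 # c2 # D)"
        using c by (induction T) (auto simp: adjp_Cons)
    qed
    then show ?thesis unfolding blk_def by auto
  qed
  show "filter (\<lambda>x. x \<le> m) (blk m b g xs) = xs"
    unfolding blk_def using leT by simp
  show "length (takeWhile (\<lambda>x. x \<le> m) (blk m b g xs)) = g"
    unfolding blk_def using leT lt by (simp add: takeWhile_append2)
  show "(blk m b g xs ! g = Suc m) = b"
    unfolding blk_def using lt by (simp add: nth_append)
qed

lemma blk_inv:
  assumes "ys \<in> LL (Suc (Suc m))" "adjp (Suc m) ys"
  defines "g \<equiv> length (takeWhile (\<lambda>x. x \<le> m) ys)"
  shows "blk m (ys ! g = Suc m) g (filter (\<lambda>x. x \<le> m) ys) = ys"
    "filter (\<lambda>x. x \<le> m) ys \<in> LL m" "g \<le> m"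
proof -
  obtain T D c1 c2 where ys: "ys = T @ [c1, c2] @ D"
    and c: "(c1 = Suc m \<and> c2 = Suc (Suc m)) \<or> (c1 = Suc (Suc m) \<and> c2 = Suc m)"
    using adjp_decomp[OF assms(2)] by blast
  have d: "distinct (T @ [c1, c2] @ D)" and s: "set (T @ [c1, c2] @ D) = {1..Suc (Suc m)}"
    using assms(1) ys by (auto simp: LL_def)
  have leT: "\<forall>x\<in>set T. x \<le> m" "\<forall>x\<in>set D. x \<le> m"
  proof -
    show "\<forall>x\<in>set T. x \<le> m"
    proof
      fix x assume x: "x \<in> set T"
      then have "x \<in> {1..Suc (Suc m)}" "x \<noteq> c1" "x \<noteq> c2" using s d by auto
      then show "x \<le> m" using c by auto
    qed
    show "\<forall>x\<in>set D. x \<le> m"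
    proof
      fix x assume x: "x \<in> set D"
      then have "x \<in> {1..Suc (Suc m)}" "x \<noteq> c1" "x \<noteq> c2" using s d by auto
      then show "x \<le> m" using c by auto
    qed
  qed
  have f: "filter (\<lambda>x. x \<le> m) ys = T @ D" unfolding ys using leT c by auto
  have gT: "g = length T" unfolding g_def ys using leT c by (auto simp: takeWhile_append2)
  have cg: "ys ! g = c1" unfolding gT ys by (simp add: nth_append)
  show "blk m (ys ! g = Suc m) g (filter (\<lambda>x. x \<le> m) ys) = ys"
    unfolding f cg gT blk_def using c ys by auto
  have dTD: "distinct (T @ D)" using d by auto
  have "set (T @ D) = {1..Suc (Suc m)} - {c1, c2}" using s d by auto
  also have "\<dots> = {1..m}" using c by auto
  finally show "filter (\<lambda>x. x \<le> m) ys \<in> LL m" unfolding f using dTD by (simp add: LL_def)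
  then have "length (T @ D) = m" using LL_length f by metis
  then show "g \<le> m" using gT by simp
qed


lemma blk_weights:
  assumes "xs \<in> LL m" "g \<le> m"
  shows "invL (blk m True g xs) = invL xs + 2 * (m - g)"
    "invL (blk m False g xs) = Suc (invL (blk m True g xs))"
    "majL (blk m False g xs) = majL (blk m True g xs) + Suc g"
    "g < m \<Longrightarrow> majL (blk m True g xs) + (if 0 < g \<and> xs!g < xs!(g-1) then g else 0)
        = majL xs + 2 + 2 * desL (drop g xs) + g"
    "g = m \<Longrightarrow> majL (blk m True g xs) = majL xs"
proof -
  define A where "A = take g xs"
  define B where "B = drop g xs"
  have xs: "xs = A @ B" by (simp add: A_def B_def)
  have lx: "length xs = m" using LL_length assms by blast
  have lA: "length A = g" using lx assms by (simp add: A_def)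
  have lB: "length B = m - g" using lx assms by (simp add: B_def)
  have le: "\<forall>x\<in>set xs. x \<le> m" using assms LL_le by blast
  have leA: "\<forall>x\<in>set A. x \<le> m" and leB: "\<forall>x\<in>set B. x \<le> m" using le xs by auto
  have b1: "blk m True g xs = A @ (Suc m # Suc (Suc m) # B)" by (simp add: blk_def A_def B_def)
  have b2: "blk m False g xs = A @ (Suc (Suc m) # Suc m # B)" by (simp add: blk_def A_def B_def)
  have fA1: "filter (\<lambda>x. Suc m < x) A = []" "filter (\<lambda>x. Suc (Suc m) < x) A = []"
    using leA by (auto simp: filter_empty_conv)
  have fB1: "filter (\<lambda>y. y < Suc m) B = B" "filter (\<lambda>y. y < Suc (Suc m)) B = B"
    using leB by (auto simp: filter_id_conv)
  have crs1: "crs A (Suc m # Suc (Suc m) # B) = crs A B" "crs A (Suc (Suc m) # Suc m # B) = crs A B"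
    using fA1 by (simp_all add: crs_Cons2)
  have ix: "invL xs = invL A + invL B + crs A B" unfolding xs by (rule invL_append)
  show "invL (blk m True g xs) = invL xs + 2 * (m - g)"
    unfolding b1 invL_append crs1 ix using fB1 lB by simp
  show "invL (blk m False g xs) = Suc (invL (blk m True g xs))"
    unfolding b1 b2 invL_append crs1 using fB1 lB by simp
  have lastA: "A \<noteq> [] \<Longrightarrow> last A \<le> m" using leA by auto
  have hB: "B \<noteq> [] \<Longrightarrow> hd B \<le> m" using leB by auto
  show "majL (blk m False g xs) = majL (blk m True g xs) + Suc g"
    unfolding b1 b2 majL_append using lastA hB lA by (auto simp: majL_Cons desL_Cons)
  have mx: "majL xs = majL A + majL B + g * desL B + (if A \<noteq> [] \<and> B \<noteq> [] \<and> hd B < last A then g else 0)"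
    unfolding xs majL_append lA by simp
  show "g < m \<Longrightarrow> majL (blk m True g xs) + (if 0 < g \<and> xs!g < xs!(g-1) then g else 0)
        = majL xs + 2 + 2 * desL (drop g xs) + g"
  proof -
    assume gm: "g < m"
    have Bn: "B \<noteq> []" using lB gm by auto
    have hdB: "hd B = xs!g" using gm lx by (simp add: B_def hd_drop_conv_nth)
    have An: "A \<noteq> [] \<longleftrightarrow> 0 < g" using lA by auto
    have lastA': "0 < g \<Longrightarrow> last A = xs!(g-1)"
    proof -
      assume "0 < g"
      then obtain i where i: "g = Suc i" by (cases g) auto
      show ?thesis using gm lx unfolding A_def i by (simp add: take_Suc_conv_app_nth)
    qed
    have "majL (blk m True g xs) = majL A + (2 + 2 * desL B + majL B) + g * (Suc (desL B))"
      unfolding b1 majL_append using lastA hB Bn lA by (auto simp: majL_Cons desL_Cons)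
    then show ?thesis using mx Bn hdB An lastA' by (auto simp: B_def algebra_simps)
  qed
  show "g = m \<Longrightarrow> majL (blk m True g xs) = majL xs"
  proof -
    assume "g = m"
    then have "B = []" using lB by simp
    then show ?thesis unfolding b1 majL_append using lastA by (auto simp: majL_Cons desL_Cons xs)
  qed
qed


definition EQ :: "real \<Rightarrow> nat \<Rightarrow> real" where "EQ q k = (\<Sum>j<k. q ^ (2*j+2))"
definition FF :: "real \<Rightarrow> nat \<Rightarrow> nat \<Rightarrow> nat \<Rightarrow> real" where
  "FF q m h k = (1 - q ^ Suc m) + (\<Sum>g\<in>{h..<m}. q ^ (g+2) * (1 - q ^ Suc g)) + (1 - q ^ Suc h) * (1 - q ^ h) * EQ q k"
definition PP :: "real \<Rightarrow> nat \<Rightarrow> real" where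
  "PP q m = (1 - q ^ Suc m) + (\<Sum>g<m. q ^ (g+2) * (1 - q ^ Suc g))"

lemma EQ_Suc: "EQ q (Suc k) = EQ q k + q^(2*k+2)"
  by (simp add: EQ_def)

lemma EQ_id: "EQ q k * (1 - q^2) = q^2 - q^(2*k+2)"
proof (induction k)
  case 0
  then show ?case by (simp add: EQ_def power2_eq_square)
next
  case (Suc k)
  have p: "q^(2*Suc k+2) = q^(2*k+2) * q^2" by (simp add: power_add[symmetric])
  have "EQ q (Suc k) * (1 - q^2) = EQ q k * (1 - q^2) + q^(2*k+2) * (1 - q^2)"
    unfolding EQ_Suc by (simp add: algebra_simps)
  also have "\<dots> = q^2 - q^(2*Suc k+2)" unfolding Suc.IH p by (simp add: algebra_simps)
  finally show ?case .
qed

lemma FF_R1: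
  assumes "h < m"
  shows "FF q m h k = q^(h+2+2*k) * (1 - q ^ Suc h) + FF q m (Suc h) k"
proof -
  have s: "(\<Sum>g\<in>{h..<m}. q ^ (g+2) * (1 - q ^ Suc g)) = q^(h+2) * (1 - q ^ Suc h) + (\<Sum>g\<in>{Suc h..<m}. q ^ (g+2) * (1 - q ^ Suc g))"
    using assms by (simp add: sum.atLeast_Suc_lessThan)
  have e: "EQ q k * (1 - q^2) = q^2 - q^(2*k+2)" by (rule EQ_id)
  define E where "E = EQ q k"
  define X where "X = q^h"
  define Y where "Y = q^(2*k)"
  have p2: "q^(2*k+2) = q^2 * q^(2*k)" by (simp only: power_add mult.commute)
  have e': "E * (1 - q^2) = q^2 - q^2 * Y" using e unfolding E_def Y_def p2 .
  have "(1 - q ^ Suc h) * (1 - q ^ h) * EQ q k + q^(h+2) * (1 - q ^ Suc h)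
      = q^(h+2+2*k) * (1 - q ^ Suc h) + (1 - q ^ Suc (Suc h)) * (1 - q ^ Suc h) * EQ q k"
  proof -
    have "(1 - q*X) * (1 - X) * E + X*q^2 * (1 - q*X) - (X*q^2*Y * (1 - q*X) + (1 - q*q*X) * (1 - q*X) * E)
        = (1 - q*X) * X * (q^2 - q^2*Y - E * (1 - q^2))"
      by (simp add: algebra_simps power2_eq_square)
    also have "\<dots> = 0" using e' by simp
    finally have "(1 - q*X) * (1 - X) * E + X*q^2 * (1 - q*X) = X*q^2*Y * (1 - q*X) + (1 - q*q*X) * (1 - q*X) * E"
      by simp
    then show ?thesis unfolding E_def X_def Y_def by (simp add: power_add power2_eq_square algebra_simps)
  qed
  then show ?thesis unfolding FF_def s by (simp add: algebra_simps)
qed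

lemma FF_R2:
  assumes "h < m"
  shows "FF q m h (Suc k) = q^(2+2*k) * (1 - q ^ Suc h) + FF q m (Suc h) k"
proof -
  have "FF q m h (Suc k) = FF q m h k + (1 - q ^ Suc h) * (1 - q ^ h) * q^(2*k+2)"
    unfolding FF_def EQ_Suc by (simp add: algebra_simps)
  also have "\<dots> = q^(h+2+2*k) * (1 - q ^ Suc h) + FF q m (Suc h) k + (1 - q ^ Suc h) * (1 - q ^ h) * q^(2*k+2)"
    using FF_R1[OF assms] by simp
  also have "\<dots> = q^(2+2*k) * (1 - q ^ Suc h) + FF q m (Suc h) k"
    by (simp add: algebra_simps power_add)
  finally show ?thesis .
qed

lemma Qsum:
  assumes "xs \<in> LL m"
  shows "h + d = m \<Longrightarrow> (\<Sum>g=h..m. q ^ majL (blk m True g xs) * (1 - q ^ Suc g)) = q ^ majL xs * FF q m h (desL (drop (h-1) xs))"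
proof (induction d arbitrary: h)
  case 0
  then have h: "h = m" by simp
  have lx: "length xs = m" using LL_length assms by blast
  have "desL (drop (m-1) xs) = 0"
  proof (cases m)
    case 0 then show ?thesis using lx by simp
  next
    case (Suc k)
    then have "drop (m-1) xs = [xs!k]" using lx by (metis Cons_nth_drop_Suc diff_Suc_1 drop_all le_refl lessI)
    then show ?thesis by simp
  qed
  then show ?case using h blk_weights(5)[OF assms, of m] by (simp add: FF_def EQ_def)
next
  case (Suc d)
  then have hm: "h < m" by simp
  have lx: "length xs = m" using LL_length assms by blast
  define k where "k = desL (drop h xs)"
  have IH: "(\<Sum>g=Suc h..m. q ^ majL (blk m True g xs) * (1 - q ^ Suc g)) = q ^ majL xs * FF q m (Suc h) k"
    using Suc.IH[of "Suc h"] Suc.prems by (simp add: k_def)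
  have split: "(\<Sum>g=h..m. q ^ majL (blk m True g xs) * (1 - q ^ Suc g))
     = q ^ majL (blk m True h xs) * (1 - q ^ Suc h) + (\<Sum>g=Suc h..m. q ^ majL (blk m True g xs) * (1 - q ^ Suc g))"
    using hm by (simp add: sum.atLeast_Suc_atMost)
  have w: "majL (blk m True h xs) + (if 0 < h \<and> xs!h < xs!(h-1) then h else 0) = majL xs + 2 + 2 * k + h"
    using blk_weights(4)[OF assms, of h] hm by (simp add: k_def)
  have kk: "desL (drop (h-1) xs) = k + (if 0 < h \<and> xs!h < xs!(h-1) then 1 else 0)"
  proof (cases h)
    case 0 then show ?thesis by (simp add: k_def)
  next
    case (Suc i)
    have d: "drop i xs = xs!i # drop h xs" using Suc hm lx by (metis Cons_nth_drop_Suc Suc_lessD)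
    have "hd (drop h xs) = xs!h" "drop h xs \<noteq> []" using hm lx by (auto simp: hd_drop_conv_nth)
    then show ?thesis using Suc d by (simp add: desL_Cons k_def)
  qed
  show ?case
  proof (cases "0 < h \<and> xs!h < xs!(h-1)")
    case True
    then have "majL (blk m True h xs) = majL xs + (2 + 2 * k)" "desL (drop (h-1) xs) = Suc k" using w kk by auto
    moreover have "q ^ (majL xs + (2 + 2 * k)) * (1 - q ^ Suc h) + q ^ majL xs * FF q m (Suc h) k
        = q ^ majL xs * (q^(2+2*k) * (1 - q ^ Suc h) + FF q m (Suc h) k)"
      by (simp add: power_add algebra_simps)
    ultimately show ?thesis unfolding split IH FF_R2[OF hm, of q k, symmetric] by simp
  next
    case False
    then have "majL (blk m True h xs) = majL xs + (h + 2 + 2 * k)" "desL (drop (h-1) xs) = k" using w kk by auto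
    moreover have "q ^ (majL xs + (h + 2 + 2 * k)) * (1 - q ^ Suc h) + q ^ majL xs * FF q m (Suc h) k
        = q ^ majL xs * (q^(h+2+2*k) * (1 - q ^ Suc h) + FF q m (Suc h) k)"
      by (simp add: power_add algebra_simps)
    ultimately show ?thesis unfolding split IH FF_R1[OF hm, of q k, symmetric] by simp
  qed
qed

lemma Qsum0:
  assumes "xs \<in> LL m"
  shows "(\<Sum>g=0..m. q ^ majL (blk m True g xs) * (1 - q ^ Suc g)) = q ^ majL xs * PP q m"
proof -
  have "FF q m 0 k = PP q m" for k unfolding FF_def PP_def by (simp add: atLeast0LessThan)
  then show ?thesis using Qsum[OF assms, of 0 m q] by simp
qed


lemma gs_rec: "(\<Sum>ys\<in>LL (Suc (Suc m)). wt q ys) = PP q m * (\<Sum>xs\<in>LL m. wt q xs)"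
proof -
  define Ad where "Ad = {ys\<in>LL (Suc (Suc m)). adjp (Suc m) ys}"
  define N where "N = {ys\<in>LL (Suc (Suc m)). \<not> adjp (Suc m) ys}"
  have un: "LL (Suc (Suc m)) = Ad \<union> N" "Ad \<inter> N = {}" by (auto simp: Ad_def N_def)
  have fin: "finite Ad" "finite N" using finite_LL by (auto simp: Ad_def N_def)
  have "(\<Sum>ys\<in>LL (Suc (Suc m)). wt q ys) = (\<Sum>ys\<in>Ad. wt q ys) + (\<Sum>ys\<in>N. wt q ys)"
    unfolding un(1) by (rule sum.union_disjoint[OF fin un(2)])
  also have "(\<Sum>ys\<in>N. wt q ys) = 0" unfolding N_def by (rule nonadj_zero)
  also have "(\<Sum>ys\<in>Ad. wt q ys) = (\<Sum>(xs,g,b)\<in>LL m \<times> {0..m} \<times> UNIV. wt q (blk m b g xs))"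
  proof -
    define gi where "gi = (\<lambda>ys. length (takeWhile (\<lambda>x. x \<le> m) ys))"
    show ?thesis
    proof (rule sum.reindex_bij_witness[where i = "\<lambda>(xs,g,b). blk m b g xs"
          and j = "\<lambda>ys. (filter (\<lambda>x. x \<le> m) ys, gi ys, ys ! gi ys = Suc m)"], goal_cases)
      case (1 a)
      then show ?case using blk_inv[of a m] by (auto simp: Ad_def gi_def)
    next
      case (2 a)
      then show ?case using blk_inv[of a m] by (auto simp: Ad_def gi_def)
    next
      case (3 b)
      obtain xs g c where b: "b = (xs, g, c)" by (cases b)
      then show ?case using 3 blk_props[of xs m g c] by (auto simp: gi_def)
    next
      case (4 b)
      obtain xs g c where b: "b = (xs, g, c)" by (cases b)
      then show ?case using 4 blk_props[of xs m g c] by (auto simp: Ad_def)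
    next
      case (5 a)
      then show ?case using blk_inv[of a m] by (auto simp: Ad_def gi_def)
    qed
  qed
  also have "\<dots> = (\<Sum>xs\<in>LL m. \<Sum>g\<in>{0..m}. \<Sum>b\<in>UNIV. wt q (blk m b g xs))"
    by (simp add: sum.cartesian_product)
  also have "\<dots> = (\<Sum>xs\<in>LL m. wt q xs * PP q m)"
  proof (rule sum.cong[OF refl])
    fix xs assume xs: "xs \<in> LL m"
    have "(\<Sum>g\<in>{0..m}. \<Sum>b\<in>UNIV. wt q (blk m b g xs))
        = (\<Sum>g\<in>{0..m}. (-1) ^ invL xs * (q ^ majL (blk m True g xs) * (1 - q ^ Suc g)))"
    proof (rule sum.cong[OF refl])
      fix g assume g: "g \<in> {0..m}"
      have "(\<Sum>b\<in>UNIV. wt q (blk m b g xs)) = wt q (blk m True g xs) + wt q (blk m False g xs)"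
        by (simp add: UNIV_bool)
      also have "\<dots> = (-1) ^ invL xs * (q ^ majL (blk m True g xs) * (1 - q ^ Suc g))"
      proof -
        have sg: "(-1::real) ^ invL (blk m True g xs) = (-1) ^ invL xs"
          using blk_weights(1)[OF xs, of g] g by (simp add: power_add power_mult)
        have sg2: "(-1::real) ^ invL (blk m False g xs) = - ((-1) ^ invL xs)"
          using blk_weights(2)[OF xs, of g] g sg by simp
        show ?thesis unfolding wt_def sg sg2 blk_weights(3)[OF xs g[simplified]]
          by (simp add: algebra_simps power_add)
      qed
      finally show "(\<Sum>b\<in>UNIV. wt q (blk m b g xs)) = (-1) ^ invL xs * (q ^ majL (blk m True g xs) * (1 - q ^ Suc g))" .
    qed
    also have "\<dots> = (-1) ^ invL xs * (\<Sum>g=0..m. q ^ majL (blk m True g xs) * (1 - q ^ Suc g))"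
      by (simp add: sum_distrib_left)
    also have "\<dots> = wt q xs * PP q m" using Qsum0[OF xs, of q] by (simp add: wt_def)
    finally show "(\<Sum>g\<in>{0..m}. \<Sum>b\<in>UNIV. wt q (blk m b g xs)) = wt q xs * PP q m" .
  qed
  finally show ?thesis by (simp add: sum_distrib_left mult.commute)
qed


lemma majL_desL_sum:
  "majL xs = (\<Sum>i\<in>{1..<length xs}. if xs!i < xs!(i-1) then i else 0) \<and>
   desL xs = (\<Sum>i\<in>{1..<length xs}. if xs!i < xs!(i-1) then 1 else 0)"
proof (induction xs rule: desL.induct)
  case (1 x y zs)
  define f where "f = (\<lambda>i. if (x#y#zs)!i < (x#y#zs)!(i-1) then i else (0::nat))"
  define f1 where "f1 = (\<lambda>i. if (x#y#zs)!i < (x#y#zs)!(i-1) then 1 else (0::nat))"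
  define g where "g = (\<lambda>i. if (y#zs)!i < (y#zs)!(i-1) then i else (0::nat))"
  define g1 where "g1 = (\<lambda>i. if (y#zs)!i < (y#zs)!(i-1) then 1 else (0::nat))"
  have s: "{1..<length (x#y#zs)} = {1..<Suc (length (y#zs))}" by simp
  have fs: "f (Suc j) = g j + g1 j" "f1 (Suc j) = g1 j" if "1 \<le> j" for j
    using that by (auto simp: f_def g_def f1_def g1_def nth_Cons' split: nat.splits)
  have "sum f {1..<Suc (length (y#zs))} = f 1 + sum f {Suc 1..<Suc (length (y#zs))}"
    by (rule sum.atLeast_Suc_lessThan) simp
  also have "sum f {Suc 1..<Suc (length (y#zs))} = sum (f \<circ> Suc) {1..<length (y#zs)}"
    by (rule sum.atLeast_Suc_lessThan_Suc_shift)
  also have "\<dots> = sum g {1..<length (y#zs)} + sum g1 {1..<length (y#zs)}"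
    by (simp add: fs sum.distrib)
  finally have A: "sum f {1..<Suc (length (y#zs))} = f 1 + sum g {1..<length (y#zs)} + sum g1 {1..<length (y#zs)}" by simp
  have "sum f1 {1..<Suc (length (y#zs))} = f1 1 + sum f1 {Suc 1..<Suc (length (y#zs))}"
    by (rule sum.atLeast_Suc_lessThan) simp
  also have "sum f1 {Suc 1..<Suc (length (y#zs))} = sum (f1 \<circ> Suc) {1..<length (y#zs)}"
    by (rule sum.atLeast_Suc_lessThan_Suc_shift)
  also have "\<dots> = sum g1 {1..<length (y#zs)}"
    by (simp add: fs)
  finally have B: "sum f1 {1..<Suc (length (y#zs))} = f1 1 + sum g1 {1..<length (y#zs)}" by simp
  have f11: "f 1 = (if y < x then 1 else 0)" "f1 1 = (if y < x then 1 else 0)" by (simp_all add: f_def f1_def)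
  show ?case using 1 A B f11 unfolding s f_def[symmetric] f1_def[symmetric] g_def[symmetric] g1_def[symmetric]
    by (simp add: majL.simps(1) desL.simps(1))
qed (auto)

lemma invL_card: "invL xs = card {(i, j). i < j \<and> j < length xs \<and> xs!j < xs!i}"
proof (induction xs)
  case Nil
  then show ?case by simp
next
  case (Cons x xs)
  define P where "P = {(i, j). i < j \<and> j < length xs \<and> xs!j < xs!i}"
  have e: "{(i, j). i < j \<and> j < length (x#xs) \<and> (x#xs)!j < (x#xs)!i}
     = (\<lambda>j. (0, Suc j)) ` {j. j < length xs \<and> xs!j < x} \<union> (\<lambda>(i,j). (Suc i, Suc j)) ` P"
  proof (rule set_eqI)
    fix ij :: "nat \<times> nat"
    obtain i j where ij: "ij = (i, j)" by (cases ij)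
    show "ij \<in> {(i, j). i < j \<and> j < length (x#xs) \<and> (x#xs)!j < (x#xs)!i} \<longleftrightarrow>
      ij \<in> (\<lambda>j. (0, Suc j)) ` {j. j < length xs \<and> xs!j < x} \<union> (\<lambda>(i,j). (Suc i, Suc j)) ` P"
      unfolding ij P_def
      by (cases i; cases j) (auto simp: image_iff)
  qed
  have fin: "finite P" unfolding P_def by (rule finite_subset[of _ "{..<length xs} \<times> {..<length xs}"]) auto
  have d: "(\<lambda>j. (0::nat, Suc j)) ` {j. j < length xs \<and> xs!j < x} \<inter> (\<lambda>(i,j). (Suc i, Suc j)) ` P = {}"
    by auto
  have c1: "card ((\<lambda>j. (0::nat, Suc j)) ` {j. j < length xs \<and> xs!j < x}) = length (filter (\<lambda>y. y < x) xs)"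
    by (subst card_image) (auto simp: inj_on_def length_filter_conv_card)
  have c2: "card ((\<lambda>(i,j). (Suc i, Suc j)) ` P) = card P"
    by (rule card_image) (auto simp: inj_on_def)
  show ?case unfolding e using Cons.IH fin d c1 c2
    by (subst card_Un_disjoint) (auto simp: P_def)
qed


definition lst :: "nat \<Rightarrow> (nat \<Rightarrow> nat) \<Rightarrow> nat list" where
  "lst n \<sigma> = map \<sigma> [1..<Suc n]"

lemma lst_nth: "i < n \<Longrightarrow> lst n \<sigma> ! i = \<sigma> (Suc i)"
  by (simp add: lst_def del: upt_Suc)

lemma length_lst: "length (lst n \<sigma>) = n"
  by (simp add: lst_def del: upt_Suc)

lemma maj_lst: "maj n \<sigma> = majL (lst n \<sigma>)"
proof -
  have "majL (lst n \<sigma>) = (\<Sum>i\<in>{1..<n}. if lst n \<sigma> ! i < lst n \<sigma> ! (i-1) then i else 0)"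
    using majL_desL_sum[of "lst n \<sigma>"] by (simp add: length_lst)
  also have "\<dots> = (\<Sum>i\<in>{1..<n}. if \<sigma> (Suc i) < \<sigma> i then i else 0)"
    by (rule sum.cong[OF refl]) (auto simp: lst_nth)
  also have "\<dots> = (\<Sum>i\<in>{i\<in>{1..<n}. \<sigma> (Suc i) < \<sigma> i}. i)"
    by (rule sum.inter_filter[symmetric]) simp
  also have "{i\<in>{1..<n}. \<sigma> (Suc i) < \<sigma> i} = {i. 1 \<le> i \<and> i < n \<and> \<sigma> i > \<sigma> (Suc i)}" by auto
  finally show ?thesis unfolding maj_def by simp
qed

lemma inv_lst: "inv_num n \<sigma> = invL (lst n \<sigma>)"
proof -
  have "invL (lst n \<sigma>) = card {(i, j). i < j \<and> j < n \<and> lst n \<sigma> ! j < lst n \<sigma> ! i}"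
    using invL_card[of "lst n \<sigma>"] by (simp add: length_lst)
  also have "{(i, j). i < j \<and> j < n \<and> lst n \<sigma> ! j < lst n \<sigma> ! i} = {(i, j). i < j \<and> j < n \<and> \<sigma> (Suc j) < \<sigma> (Suc i)}"
    by (auto simp: lst_nth)
  also have "card \<dots> = card ((\<lambda>(i,j). (Suc i, Suc j)) ` {(i, j). i < j \<and> j < n \<and> \<sigma> (Suc j) < \<sigma> (Suc i)})"
    by (rule card_image[symmetric]) (auto simp: inj_on_def)
  also have "(\<lambda>(i,j). (Suc i, Suc j)) ` {(i, j). i < j \<and> j < n \<and> \<sigma> (Suc j) < \<sigma> (Suc i)}
      = {(i, j). i \<in> {1..n} \<and> j \<in> {1..n} \<and> i < j \<and> \<sigma> i > \<sigma> j}"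
  proof (rule set_eqI)
    fix ij :: "nat \<times> nat"
    obtain i j where ij: "ij = (i, j)" by (cases ij)
    show "ij \<in> (\<lambda>(i,j). (Suc i, Suc j)) ` {(i, j). i < j \<and> j < n \<and> \<sigma> (Suc j) < \<sigma> (Suc i)} \<longleftrightarrow>
        ij \<in> {(i, j). i \<in> {1..n} \<and> j \<in> {1..n} \<and> i < j \<and> \<sigma> i > \<sigma> j}"
      unfolding ij by (cases i; cases j) (auto simp: image_iff)
  qed
  finally show ?thesis unfolding inv_num_def by simp
qed

lemma lst_LL:
  assumes p: "\<sigma> permutes {1..n}"
  shows "lst n \<sigma> \<in> LL n"
proof -
  have s: "set [1..<Suc n] = {1..n}" by auto
  have "set (lst n \<sigma>) = \<sigma> ` {1..n}" unfolding lst_def set_map s by (rule refl)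
  also have "\<dots> = {1..n}" by (rule permutes_image[OF p])
  finally have "set (lst n \<sigma>) = {1..n}" .
  moreover have "distinct (lst n \<sigma>)" unfolding lst_def distinct_map s
    using permutes_inj_on[OF p] by simp
  ultimately show ?thesis by (simp add: LL_def)
qed

lemma Fs_lst: "Fs (lst n \<sigma>) = {i. i < n \<and> \<sigma> (Suc i) = Suc i}"
  by (auto simp: Fs_def length_lst lst_nth)

definition unl :: "nat \<Rightarrow> nat list \<Rightarrow> nat \<Rightarrow> nat" where
  "unl n xs = (\<lambda>i. if i \<in> {1..n} then xs!(i-1) else i)"

lemma derange_bij:
  "(\<Sum>\<sigma>\<in>derangements n. (-1) ^ inv_num n \<sigma> * q ^ maj n \<sigma>) = (\<Sum>xs\<in>{xs\<in>LL n. fixL xs = 0}. wt q xs)"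
proof (rule sum.reindex_bij_witness[where i = "unl n" and j = "lst n"], goal_cases)
  case (1 \<sigma>)
  then have p: "\<sigma> permutes {1..n}" by (simp add: derangements_def)
  show ?case
  proof
    fix i show "unl n (lst n \<sigma>) i = \<sigma> i"
      using permutes_not_in[OF p, of i] by (cases i) (auto simp: unl_def lst_nth)
  qed
next
  case (2 \<sigma>)
  then have p: "\<sigma> permutes {1..n}" and d: "\<forall>i\<in>{1..n}. \<sigma> i \<noteq> i" by (auto simp: derangements_def)
  have "Fs (lst n \<sigma>) = {}" unfolding Fs_lst using d by auto
  then show ?case using lst_LL[OF p] by (simp add: fixL_def)
next
  case (3 xs)
  then have l: "length xs = n" using LL_length by blast
  show ?case by (rule nth_equalityI) (auto simp: l length_lst lst_nth unl_def)
next
  case (4 xs)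
  then have xs: "xs \<in> LL n" and f0: "fixL xs = 0" by auto
  have l: "length xs = n" using LL_length xs by blast
  have dx: "distinct xs" and sx: "set xs = {1..n}" using xs by (auto simp: LL_def)
  have inj: "inj_on (unl n xs) {1..n}"
  proof (rule inj_onI)
    fix i j assume ij: "i \<in> {1..n}" "j \<in> {1..n}" "unl n xs i = unl n xs j"
    then have "xs!(i-1) = xs!(j-1)" by (simp add: unl_def)
    moreover have "i - 1 < length xs" "j - 1 < length xs" using ij l by auto
    ultimately have e: "i - 1 = j - 1" using dx nth_eq_iff_index_eq by blast
    have "1 \<le> i" "1 \<le> j" using ij(1,2) by auto
    then show "i = j" using e by arith
  qed
  have sub: "unl n xs ` {1..n} \<subseteq> {1..n}"
  proof
    fix y assume "y \<in> unl n xs ` {1..n}"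
    then obtain i where i: "i \<in> {1..n}" "y = xs!(i-1)" by (auto simp: unl_def)
    then have "y \<in> set xs" using l by auto
    then show "y \<in> {1..n}" using sx by simp
  qed
  have bij: "bij_betw (unl n xs) {1..n} {1..n}"
    unfolding bij_betw_def using inj endo_inj_surj[OF _ sub inj] by simp
  have p: "unl n xs permutes {1..n}"
    by (rule bij_imp_permutes[OF bij]) (auto simp: unl_def)
  have "Fs xs = {}" using f0 finite_Fs[of xs] by (simp add: fixL_def)
  then have nf: "\<forall>k<n. xs!k \<noteq> Suc k" using l by (auto simp: Fs_def)
  have "\<forall>i\<in>{1..n}. unl n xs i \<noteq> i"
  proof
    fix i assume i: "i \<in> {1..n}"
    then have "i - 1 < n" "Suc (i - 1) = i" by auto
    then show "unl n xs i \<noteq> i" using nf i unfolding unl_def by metis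
  qed
  then show ?case using p by (simp add: derangements_def)
next
  case (5 \<sigma>)
  then show ?case by (simp add: wt_def maj_lst inv_lst)
qed


definition Qf :: "real \<Rightarrow> nat \<Rightarrow> real" where "Qf q n = (\<Prod>i=1..n. qi q i)"

lemma qfact_Qf: "qfact q n = Qf q n"
  unfolding qfact_def Qf_def by (rule prod.cong) (auto simp: qint_def qi_def)

lemma one_minus_qi: "(1 - q) * qi q n = 1 - q ^ n"
proof (induction n)
  case 0 then show ?case by (simp add: qi_def)
next
  case (Suc n)
  show ?case unfolding qi_Suc distrib_left Suc.IH by (simp add: algebra_simps)
qed

lemma qi_nz:
  assumes "q \<noteq> -1" "0 < i"
  shows "qi q i \<noteq> 0"
proof
  assume z: "qi q i = 0"
  show False
  proof (cases "q = 1")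
    case True
    then show False using z assms by (simp add: qi_def)
  next
    case False
    have "1 - q ^ i = 0" using one_minus_qi[of q i] z by simp
    then have "q ^ i = 1" by simp
    then have "norm q = 1" using power_eq_1_iff[of q i] assms by auto
    then have "q = 1 \<or> q = -1" by auto
    then show False using False assms by auto
  qed
qed

lemma Qf_Suc: "Qf q (Suc n) = Qf q n * qi q (Suc n)"
  unfolding Qf_def by (simp add: prod.atLeast1_atMost_eq)

lemma Qf_0: "Qf q 0 = 1" by (simp add: Qf_def)

lemma Qf_nz: "q \<noteq> -1 \<Longrightarrow> Qf q n \<noteq> 0"
  by (induction n) (auto simp: Qf_0 Qf_Suc qi_nz)

definition hh :: "real \<Rightarrow> nat \<Rightarrow> nat \<Rightarrow> real" where
  "hh q n k = (\<Sum>xs\<in>{xs\<in>LL n. fixL xs = k}. wt q xs)"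

lemma hh_rel: "k \<le> n \<Longrightarrow> Qf q k * Qf q (n-k) * hh q n k = Qf q n * hh q (n-k) 0"
proof (induction k arbitrary: n)
  case 0
  then show ?case by (simp add: Qf_0)
next
  case (Suc k)
  then obtain n' where n: "n = Suc n'" by (cases n) auto
  have kn: "k \<le> n'" using Suc n by simp
  have fr: "qi q (Suc k) * hh q (Suc n') (Suc k) = qi q (Suc n') * hh q n' k"
    using fix_rec[of q k n'] by (simp add: hh_def)
  have "Qf q (Suc k) * Qf q (n - Suc k) * hh q n (Suc k) = Qf q k * Qf q (n' - k) * (qi q (Suc k) * hh q (Suc n') (Suc k))"
    by (simp add: n Qf_Suc algebra_simps)
  also have "\<dots> = qi q (Suc n') * (Qf q k * Qf q (n' - k) * hh q n' k)" unfolding fr by (simp add: algebra_simps)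
  also have "\<dots> = qi q (Suc n') * (Qf q n' * hh q (n' - k) 0)" using Suc.IH[OF kn] by simp
  also have "\<dots> = Qf q n * hh q (n - Suc k) 0" by (simp add: n Qf_Suc algebra_simps)
  finally show ?case .
qed

definition ss :: "real \<Rightarrow> nat \<Rightarrow> real" where
  "ss q n = (\<Sum>xs\<in>LL n. wt q xs)"

lemma fixL_le: "xs \<in> LL n \<Longrightarrow> fixL xs \<le> n"
proof -
  assume xs: "xs \<in> LL n"
  have "Fs xs \<subseteq> {..<length xs}" by (auto simp: Fs_def)
  then have "card (Fs xs) \<le> length xs" by (metis card_lessThan card_mono finite_lessThan)
  then show ?thesis using LL_length[OF xs] by (simp add: fixL_def)
qed

lemma ss_hh: "ss q n = (\<Sum>k=0..n. hh q n k)"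
  unfolding ss_def hh_def
  by (rule sum.group[symmetric]) (auto simp: finite_LL fixL_le)

lemma PP_eq: "(1 + q) * PP q m = (1 - q) * qi q (Suc m) * qi q (Suc (Suc m))"
proof (induction m)
  case 0
  then show ?case by (simp add: PP_def qi_def algebra_simps)
next
  case (Suc m)
  have ex0: "2*m+3 = (m + 2) + Suc m" by simp
  have e0: "q ^ (2*m+3) = q ^ (m + 2) * q ^ Suc m" by (subst ex0) (rule power_add)
  have p: "PP q (Suc m) = PP q m + q ^ Suc m - q ^ (2*m+3)"
    unfolding PP_def e0 by (simp add: algebra_simps)
  have a: "qi q (Suc (Suc m)) = qi q (Suc m) + q ^ Suc m" "qi q (Suc (Suc (Suc m))) = qi q (Suc (Suc m)) + q ^ Suc (Suc m)"
    by (simp_all add: qi_Suc)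
  have b: "(1 - q) * qi q (Suc (Suc m)) = 1 - q ^ Suc (Suc m)" by (rule one_minus_qi)
  have "(1 + q) * PP q (Suc m) = (1 + q) * PP q m + (1 + q) * (q ^ Suc m - q ^ (2*m+3))"
    unfolding p by (simp add: algebra_simps)
  also have "\<dots> = (1 - q) * qi q (Suc m) * qi q (Suc (Suc m)) + (1 + q) * (q ^ Suc m - q ^ (2*m+3))"
    using Suc.IH by simp
  also have "\<dots> = (1 - q) * qi q (Suc (Suc m)) * qi q (Suc (Suc (Suc m)))"
  proof -
    have "(1 - q) * qi q (Suc (Suc m)) * qi q (Suc (Suc (Suc m))) - (1 - q) * qi q (Suc m) * qi q (Suc (Suc m))
        = (1 - q) * qi q (Suc (Suc m)) * (q ^ Suc m + q ^ Suc (Suc m))"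
      unfolding a by (simp add: algebra_simps)
    also have "\<dots> = (1 - q ^ Suc (Suc m)) * (q ^ Suc m + q ^ Suc (Suc m))"
      using b by simp
    also have "\<dots> = (1 + q) * (q ^ Suc m - q ^ (2*m+3))"
    proof -
      have ex: "2*m+3 = Suc m + Suc (Suc m)" by simp
      have e: "q ^ (2*m+3) = q ^ Suc m * q ^ Suc (Suc m)" by (subst ex) (rule power_add)
      show ?thesis unfolding e by (simp add: algebra_simps)
    qed
    finally show ?thesis by simp
  qed
  finally show ?case .
qed


lemma LL0: "LL 0 = {[]}" by (auto simp: LL_def)

lemma LL1: "LL (Suc 0) = {[1]}"
proof
  show "LL (Suc 0) \<subseteq> {[1]}"
  proof
    fix xs assume xs: "xs \<in> LL (Suc 0)"
    then have "length xs = 1" using LL_length by fastforce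
    then obtain a where "xs = [a]" by (cases xs) auto
    then show "xs \<in> {[1]}" using xs by (auto simp: LL_def)
  qed
  show "{[1]} \<subseteq> LL (Suc 0)" by (auto simp: LL_def)
qed

lemma ss_closed:
  assumes "q \<noteq> -1"
  shows "ss q n = Qf q n * ((1 - q) / (1 + q)) ^ (n div 2)"
proof -
  have q1: "1 + q \<noteq> 0" using assms by auto
  have PPt: "PP q m = (1 - q) / (1 + q) * (qi q (Suc m) * qi q (Suc (Suc m)))" for m
    using PP_eq[of q m] q1 by (simp add: field_simps)
  have "ss q m = Qf q m * ((1 - q) / (1 + q)) ^ (m div 2) \<and> ss q (Suc m) = Qf q (Suc m) * ((1 - q) / (1 + q)) ^ (Suc m div 2)" for m
  proof (induction m)
    case 0
    then show ?case by (simp add: ss_def LL0 LL1 wt_def Qf_0 Qf_Suc qi_def)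
  next
    case (Suc m)
    have "ss q (Suc (Suc m)) = PP q m * ss q m" unfolding ss_def by (rule gs_rec)
    also have "\<dots> = Qf q (Suc (Suc m)) * ((1 - q) / (1 + q)) ^ (Suc (Suc m) div 2)"
      using Suc.IH PPt[of m] by (simp add: Qf_Suc algebra_simps)
    finally show ?case using Suc.IH by simp
  qed
  then show ?thesis by blast
qed

definition W :: "real \<Rightarrow> nat \<Rightarrow> nat \<Rightarrow> real" where
  "W q n k = (if k \<le> n then 1 / (Qf q k * Qf q (n - k)) else 0)"

lemma W_pascal:
  assumes q: "q \<noteq> -1" and k: "0 < k"
  shows "qi q (Suc n) * W q (Suc n) k = q ^ k * W q n k + W q n (k - 1)"
proof (cases "k \<le> n")
  case True
  obtain j where j: "k = Suc j" using k by (cases k) auto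
  define a where "a = Qf q j"
  define b where "b = Qf q (n - Suc j)"
  define u where "u = qi q (Suc j)"
  define v where "v = qi q (Suc (n - Suc j))"
  have jn: "Suc j \<le> n" using True j by simp
  have nz: "a \<noteq> 0" "b \<noteq> 0" "u \<noteq> 0" "v \<noteq> 0"
    using Qf_nz[OF q] qi_nz[OF q] unfolding a_def b_def u_def v_def by auto
  have w1: "W q (Suc n) k = 1 / (a * u * (b * v))"
  proof -
    have "Suc n - Suc j = Suc (n - Suc j)" using jn by simp
    then show ?thesis unfolding W_def j a_def b_def u_def v_def using jn by (simp add: Qf_Suc)
  qed
  have w2: "W q n k = 1 / (a * u * b)" unfolding W_def j a_def b_def u_def using jn by (simp add: Qf_Suc)
  have w3: "W q n (k - 1) = 1 / (a * (b * v))"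
  proof -
    have "n - j = Suc (n - Suc j)" using jn by simp
    then show ?thesis unfolding W_def j a_def b_def v_def using jn by (simp add: Qf_Suc)
  qed
  have e3: "qi q (Suc n) = u + q ^ k * v"
  proof -
    have "Suc n = Suc j + Suc (n - Suc j)" using jn by simp
    then show ?thesis using qi_add[of q "Suc j" "Suc (n - Suc j)"] unfolding u_def v_def j by simp
  qed
  show ?thesis unfolding w1 w2 w3 e3 using nz by (simp add: field_simps)
next
  case False
  show ?thesis
  proof (cases "k = Suc n")
    case True
    have nz: "Qf q n \<noteq> 0" "qi q (Suc n) \<noteq> 0" using Qf_nz[OF q] qi_nz[OF q] by auto
    show ?thesis unfolding W_def using True by (simp add: Qf_Suc Qf_0 nz field_simps)
  next
    case False
    then show ?thesis unfolding W_def using \<open>\<not> k \<le> n\<close> by simp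
  qed
qed

lemma W_pascal0:
  assumes q: "q \<noteq> -1"
  shows "qi q (Suc n) * W q (Suc n) 0 = W q n 0"
  using Qf_nz[OF q] qi_nz[OF q] unfolding W_def by (simp add: Qf_Suc Qf_0 field_simps)

definition Gen :: "real \<Rightarrow> nat \<Rightarrow> real \<Rightarrow> real" where
  "Gen q n x = (\<Sum>k=0..n. (-1) ^ k * q ^ (k choose 2) * x ^ k * W q n k)"

lemma choose2_Suc: "(Suc i choose 2) = (i choose 2) + i"
  by (simp add: numeral_2_eq_2)

lemma Gen_rec:
  assumes q: "q \<noteq> -1"
  shows "qi q (Suc n) * Gen q (Suc n) x = (1 - x) * Gen q n (q * x)"
proof -
  define f where "f = (\<lambda>k. (-1::real) ^ k * q ^ (k choose 2) * x ^ k)"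
  have Gq: "Gen q n (q * x) = (\<Sum>k=0..Suc n. f k * (q ^ k * W q n k))"
    unfolding Gen_def f_def by (simp add: W_def power_mult_distrib algebra_simps)
  have Gq2: "Gen q n (q * x) = f 0 * W q n 0 + (\<Sum>i=0..n. f (Suc i) * (q ^ Suc i * W q n (Suc i)))"
    unfolding Gq by (subst sum.atLeast0_atMost_Suc_shift) simp
  have fS: "f (Suc i) = - x * ((-1) ^ i * q ^ (i choose 2) * (q * x) ^ i)" for i
    unfolding f_def choose2_Suc by (simp add: power_add power_mult_distrib algebra_simps)
  have xG: "x * Gen q n (q * x) = - (\<Sum>i=0..n. f (Suc i) * W q n i)"
    unfolding Gen_def fS by (simp add: sum_distrib_left sum_negf algebra_simps)
  have "qi q (Suc n) * Gen q (Suc n) x = (\<Sum>k=0..Suc n. f k * (qi q (Suc n) * W q (Suc n) k))"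
    unfolding Gen_def f_def by (simp add: sum_distrib_left algebra_simps)
  also have "\<dots> = f 0 * (qi q (Suc n) * W q (Suc n) 0) + (\<Sum>i=0..n. f (Suc i) * (qi q (Suc n) * W q (Suc n) (Suc i)))"
    by (subst sum.atLeast0_atMost_Suc_shift) simp
  also have "\<dots> = f 0 * W q n 0 + (\<Sum>i=0..n. f (Suc i) * (q ^ Suc i * W q n (Suc i) + W q n i))"
    using W_pascal0[OF q] W_pascal[OF q] by simp
  also have "\<dots> = Gen q n (q * x) - x * Gen q n (q * x)"
    by (subst xG, subst Gq2) (simp add: sum.distrib algebra_simps)
  finally show ?thesis by (simp add: algebra_simps)
qed

lemma Gauss:
  assumes q: "q \<noteq> -1" and n: "0 < n"
  shows "Gen q n 1 = 0"
proof -
  obtain m where m: "n = Suc m" using n by (cases n) auto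
  have "qi q (Suc m) * Gen q (Suc m) 1 = 0" using Gen_rec[OF q, of m 1] by simp
  then show ?thesis using qi_nz[OF q, of "Suc m"] m by simp
qed


lemma final_hh:
  assumes q: "q \<noteq> -1"
  shows "hh q n 0 = Qf q n * (\<Sum>k=0..n. (-1) ^ k * q ^ (k choose 2) / Qf q k * ((1 - q) / (1 + q)) ^ ((n - k) div 2))"
proof -
  define t where "t = (1 - q) / (1 + q)"
  define cF where "cF = Abs_fps (\<lambda>k. (-1) ^ k * q ^ (k choose 2) / Qf q k)"
  define eF where "eF = Abs_fps (\<lambda>i. 1 / Qf q i)"
  define tF where "tF = Abs_fps (\<lambda>n. t ^ (n div 2))"
  define aF where "aF = Abs_fps (\<lambda>n. hh q n 0 / Qf q n)"
  have nz: "\<And>i. Qf q i \<noteq> 0" using Qf_nz[OF q] by blast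
  have ce: "cF * eF = 1"
  proof (rule fps_ext)
    fix n
    have "fps_nth (cF * eF) n = (\<Sum>i=0..n. (-1) ^ i * q ^ (i choose 2) / Qf q i * (1 / Qf q (n - i)))"
      by (simp add: cF_def eF_def fps_mult_nth)
    also have "\<dots> = Gen q n 1"
      unfolding Gen_def W_def by (rule sum.cong) auto
    also have "\<dots> = fps_nth 1 n"
    proof (cases n)
      case 0 then show ?thesis by (simp add: Gen_def W_def Qf_0 numeral_2_eq_2)
    next
      case (Suc m) then show ?thesis using Gauss[OF q, of n] by simp
    qed
    finally show "fps_nth (cF * eF) n = fps_nth 1 n" .
  qed
  have ae: "aF * eF = tF"
  proof (rule fps_ext)
    fix n
    have "Qf q n * t ^ (n div 2) = ss q n" using ss_closed[OF q] by (simp add: t_def)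
    also have "\<dots> = (\<Sum>k=0..n. hh q n k)" by (rule ss_hh)
    also have "\<dots> = (\<Sum>k=0..n. Qf q n * (hh q (n - k) 0 / (Qf q k * Qf q (n - k))))"
    proof (rule sum.cong[OF refl])
      fix k assume "k \<in> {0..n}"
      then have "Qf q k * Qf q (n-k) * hh q n k = Qf q n * hh q (n-k) 0" using hh_rel by simp
      then show "hh q n k = Qf q n * (hh q (n - k) 0 / (Qf q k * Qf q (n - k)))"
        using nz[of k] nz[of "n-k"] by (simp add: field_simps)
    qed
    also have "\<dots> = Qf q n * (\<Sum>k=0..n. hh q (n - k) 0 / (Qf q k * Qf q (n - k)))"
      by (simp add: sum_distrib_left)
    finally have s: "t ^ (n div 2) = (\<Sum>k=0..n. hh q (n - k) 0 / (Qf q k * Qf q (n - k)))"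
      using nz[of n] by simp
    have "fps_nth (aF * eF) n = (\<Sum>i=0..n. hh q i 0 / Qf q i * (1 / Qf q (n - i)))"
      by (simp add: aF_def eF_def fps_mult_nth)
    also have "\<dots> = (\<Sum>i=0..n. hh q (n - (n + 0 - i)) 0 / (Qf q (n + 0 - i) * Qf q (n - (n + 0 - i))))"
      by (rule sum.cong[OF refl]) (auto simp: field_simps)
    also have "\<dots> = (\<Sum>k=0..n. hh q (n - k) 0 / (Qf q k * Qf q (n - k)))"
      by (rule sum.atLeastAtMost_rev[symmetric])
    also have "\<dots> = fps_nth tF n" using s by (simp add: tF_def)
    finally show "fps_nth (aF * eF) n = fps_nth tF n" .
  qed
  have "aF = aF * (eF * cF)" using ce by (simp add: mult.commute)
  also have "\<dots> = tF * cF" using ae by (simp add: mult.assoc[symmetric])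
  finally have a: "aF = tF * cF" .
  have "hh q n 0 / Qf q n = fps_nth aF n" by (simp add: aF_def)
  also have "\<dots> = fps_nth (tF * cF) n" using a by simp
  also have "\<dots> = (\<Sum>i=0..n. t ^ (i div 2) * ((-1) ^ (n - i) * q ^ ((n - i) choose 2) / Qf q (n - i)))"
    by (simp add: tF_def cF_def fps_mult_nth)
  also have "\<dots> = (\<Sum>i=0..n. t ^ ((n + 0 - i) div 2) * ((-1) ^ (n - (n + 0 - i)) * q ^ ((n - (n + 0 - i)) choose 2) / Qf q (n - (n + 0 - i))))"
    by (rule sum.atLeastAtMost_rev)
  also have "\<dots> = (\<Sum>k=0..n. (-1) ^ k * q ^ (k choose 2) / Qf q k * t ^ ((n - k) div 2))"
    by (rule sum.cong[OF refl]) auto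
  finally show ?thesis using nz[of n] by (simp add: t_def field_simps)
qed

theorem theorem2p4:
  fixes n :: nat and q :: real
  assumes "n \<ge> 1" and "q \<noteq> -1"
  shows "(\<Sum>\<sigma>\<in>derangements n. (-1) ^ inv_num n \<sigma> * q ^ maj n \<sigma>)
    = qfact q n * (\<Sum>k=0..n. (-1) ^ k * q ^ (k choose 2) / qfact q k
        * ((1 - q) / (1 + q)) ^ ((n - k) div 2))"
proof -
  have "(\<Sum>\<sigma>\<in>derangements n. (-1) ^ inv_num n \<sigma> * q ^ maj n \<sigma>) = hh q n 0"
    unfolding derange_bij hh_def by simp
  also have "\<dots> = Qf q n * (\<Sum>k=0..n. (-1) ^ k * q ^ (k choose 2) / Qf q k * ((1 - q) / (1 + q)) ^ ((n - k) div 2))"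
    by (rule final_hh[OF assms(2)])
  finally show ?thesis by (simp add: qfact_Qf)
qed


end
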